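(* Let $d\ge2$ be an integer and $N_1,\dots,N_d$ positive integers. Suppose $\mathbf{b}=(b_1,\dots,b_d)\in\mathbb{Z}^d$ is a nonzero vector with $\gcd(b_1,\dots,b_d)=1$ and $|b_i|\le N_i$ for all $1\le i\le d$. Then there exists a map $f_{\mathbf{b}}:\mathbb{Z}^d\to\mathbb{Z}^{d-1}$ of the form $f_{\mathbf{b}}(\mathbf{x})=M\mathbf{x}+\mathbf{v}$ with $M\in\mathbb{Z}^{(d-1)\times d}$ and $\mathbf{v}\in\mathbb{Z}^{d-1}$ such that: (1) for any $\mathbf{x}_1,\mathbf{x}_2\in\mathbb{Z}^d$, $f_{\mathbf{b}}(\mathbf{x}_1)=f_{\mathbf{b}}(\mathbf{x}_2)$ if and only if $\mathbf{x}_1-\mathbf{x}_2=k\mathbf{b}$ for some $k\in\mathbb{Z}$; (2) there exist positive integers $N_1^*,\dots,N_{d-1}^*\ge\min_{1\le i\le d}N_i$ with \[ \frac12N_1\cdots N_d\cdot\Big(\max_{1\le i\le d}\frac{|b_i|}{N_i}\Big)\le N_1^*\cdots N_{d-1}^*\le2^{d^2}N_1\cdots N_d\cdot\Big(\max_{1\le i\le d}\frac{|b_i|}{N_i}\Big) \] and $f_{\mathbf{b}}([N_1]\times\cdots\times[N_d])\subseteq[N_1^*]\times\cdots\times[N_{d-1}^*]$.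
   Context: $[N]=\{1,\dots,N\}$. *)

theory Defs
  imports Complex_Main
begin

(* Vectors in Z^n are represented as functions nat => int, with components
   indexed by 0..n-1 (only these components are relevant).
   The affine map x |-> M x + v from Z^d to Z^(d-1). *)
definition affine_map :: "nat \<Rightarrow> (nat \<Rightarrow> nat \<Rightarrow> int) \<Rightarrow> (nat \<Rightarrow> int) \<Rightarrow> (nat \<Rightarrow> int) \<Rightarrow> (nat \<Rightarrow> int)" where
  "affine_map d M v x = (\<lambda>j. (\<Sum>i<d. M j i * x i) + v j)"

end

theory Submission
  imports Defs
begin


definition swp :: "(nat \<Rightarrow> 'a) \<Rightarrow> nat \<Rightarrow> nat \<Rightarrow> 'a" where
  "swp f j = (\<lambda>l. if l = j then f (Suc j) else if l = Suc j then f j else f l)"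

locale gsl =
  fixes n :: nat and w :: "nat \<Rightarrow> real"
  assumes w_ge1: "\<And>t. t < n \<Longrightarrow> w t \<ge> 1"
begin

definition ip :: "(nat \<Rightarrow> real) \<Rightarrow> (nat \<Rightarrow> real) \<Rightarrow> real" where
  "ip x y = (\<Sum>t<n. w t * x t * y t)"

lemma w_nonneg: "t < n \<Longrightarrow> w t \<ge> 0"
  using w_ge1[of t] by linarith

lemma ip_sym: "ip x y = ip y x"
  unfolding ip_def by (simp add: mult_ac)

lemma ip_add_left: "ip (\<lambda>t. x t + y t) z = ip x z + ip y z"
  unfolding ip_def by (simp add: algebra_simps sum.distrib)

lemma ip_diff_left: "ip (\<lambda>t. x t - y t) z = ip x z - ip y z"
  unfolding ip_def by (simp add: algebra_simps sum_subtractf)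

lemma ip_scale_left: "ip (\<lambda>t. c * x t) z = c * ip x z"
  unfolding ip_def by (simp add: algebra_simps sum_distrib_left)

lemma ip_sum_left: "ip (\<lambda>t. \<Sum>l\<in>L. h l t) z = (\<Sum>l\<in>L. ip (h l) z)"
  unfolding ip_def by (simp add: sum_distrib_left sum_distrib_right sum.swap[of _ L] mult_ac)

lemma ip_cong: "(\<And>t. t < n \<Longrightarrow> x t = x' t) \<Longrightarrow> ip x y = ip x' y"
  unfolding ip_def by (rule sum.cong) auto

lemma ip_cong2: "(\<And>t. t < n \<Longrightarrow> y t = y' t) \<Longrightarrow> ip x y = ip x y'"
  unfolding ip_def by (rule sum.cong) auto

lemma ip_nonneg: "ip x x \<ge> 0"
  unfolding ip_def
proof (rule sum_nonneg)
  fix t assume "t \<in> {..<n}"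
  then have "w t \<ge> 0" using w_ge1 by force
  then show "0 \<le> w t * x t * x t" by (simp add: mult.assoc)
qed

lemma ip_coord_le: assumes "t < n" shows "w t * (x t)^2 \<le> ip x x"
proof -
  have "w t * (x t)^2 = w t * x t * x t" by (simp add: power2_eq_square mult.assoc)
  also have "\<dots> \<le> ip x x" unfolding ip_def
    apply (rule member_le_sum[of t "{..<n}" "\<lambda>t. w t * x t * x t"])
    using assms w_nonneg by (auto simp: mult.assoc)
  finally show ?thesis .
qed

lemma ip_zero: assumes "ip x x = 0" "t < n" shows "x t = 0"
proof -
  have "w t * (x t)^2 \<le> 0" using ip_coord_le[OF assms(2), of x] assms(1) by simp
  moreover have "w t \<ge> 1" using w_ge1 assms(2) by simp
  moreover have "(x t)^2 \<le> w t * (x t)^2"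
    using mult_right_mono[of 1 "w t" "(x t)^2"] \<open>w t \<ge> 1\<close> by simp
  ultimately have "(x t)^2 \<le> 0" by linarith
  then show ?thesis by simp
qed

lemma ip_zero_right: assumes "ip x x = 0" shows "ip y x = 0"
proof -
  have "ip y x = ip y (\<lambda>_. 0)" by (rule ip_cong2) (use ip_zero[OF assms] in auto)
  also have "\<dots> = 0" by (simp add: ip_def)
  finally show ?thesis .
qed


lemma ip_add_right: "ip z (\<lambda>t. x t + y t) = ip z x + ip z y"
  by (subst (1 2 3) ip_sym) (rule ip_add_left)
lemma ip_diff_right: "ip z (\<lambda>t. x t - y t) = ip z x - ip z y"
  by (subst (1 2 3) ip_sym) (rule ip_diff_left)
lemma ip_scale_right: "ip z (\<lambda>t. c * x t) = c * ip z x"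
  by (subst (1 2) ip_sym) (rule ip_scale_left)
lemma ip_sum_right: "ip z (\<lambda>t. \<Sum>l\<in>L. h l t) = (\<Sum>l\<in>L. ip z (h l))"
  by (subst ip_sym) (simp add: ip_sum_left ip_sym)

function gso :: "(nat \<Rightarrow> nat \<Rightarrow> real) \<Rightarrow> nat \<Rightarrow> nat \<Rightarrow> real" where
  "gso f k = (\<lambda>t. f k t - (\<Sum>l<k. (ip (f k) (gso f l) / ip (gso f l) (gso f l)) * gso f l t))"
  by auto
termination by (relation "measure (\<lambda>(f,k). k)") auto

declare gso.simps[simp del]

definition mu :: "(nat \<Rightarrow> nat \<Rightarrow> real) \<Rightarrow> nat \<Rightarrow> nat \<Rightarrow> real" where
  "mu f k l = ip (f k) (gso f l) / ip (gso f l) (gso f l)"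

lemma gso_eq: "gso f k t = f k t - (\<Sum>l<k. mu f k l * gso f l t)"
  by (subst gso.simps) (simp add: mu_def)

definition spn :: "(nat \<Rightarrow> nat \<Rightarrow> real) \<Rightarrow> nat \<Rightarrow> (nat \<Rightarrow> real) set" where
  "spn f k = {x. \<exists>c. \<forall>t<n. x t = (\<Sum>l<k. c l * f l t)}"

lemma spn_zero: "(\<lambda>_. 0) \<in> spn f k"
  unfolding spn_def by (rule CollectI, rule exI[of _ "\<lambda>_. 0"]) simp

lemma spn_add: "x \<in> spn f k \<Longrightarrow> y \<in> spn f k \<Longrightarrow> (\<lambda>t. x t + y t) \<in> spn f k"
  unfolding spn_def
  apply clarify
  subgoal for c c' by (rule exI[of _ "\<lambda>l. c l + c' l"]) (simp add: algebra_simps sum.distrib)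
  done

lemma spn_scale: "x \<in> spn f k \<Longrightarrow> (\<lambda>t. a * x t) \<in> spn f k"
  unfolding spn_def
  apply clarify
  subgoal for c by (rule exI[of _ "\<lambda>l. a * c l"]) (simp add: algebra_simps sum_distrib_left)
  done

lemma spn_cong: "x \<in> spn f k \<Longrightarrow> (\<And>t. t < n \<Longrightarrow> x t = y t) \<Longrightarrow> y \<in> spn f k"
  unfolding spn_def by auto

lemma spn_diff: "x \<in> spn f k \<Longrightarrow> y \<in> spn f k \<Longrightarrow> (\<lambda>t. x t - y t) \<in> spn f k"
  using spn_add[of x f k "\<lambda>t. (-1) * y t"] spn_scale[of y f k "-1"] by simp

lemma spn_gen: "l < k \<Longrightarrow> f l \<in> spn f k"
  unfolding spn_def
proof (rule CollectI, rule exI[of _ "\<lambda>l'. if l' = l then 1 else 0"], intro allI impI)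
  fix t assume "l < k" "t < n"
  have "(\<Sum>la<k. (if la = l then 1 else 0) * f la t) = (\<Sum>la<k. if la = l then f la t else 0)"
    by (rule sum.cong) auto
  then show "f l t = (\<Sum>la<k. (if la = l then 1 else 0) * f la t)" using \<open>l < k\<close> by simp
qed

lemma spn_mono: "k \<le> k' \<Longrightarrow> x \<in> spn f k \<Longrightarrow> x \<in> spn f k'"
  unfolding spn_def
  apply clarify
  subgoal for c
  proof (rule exI[of _ "\<lambda>l. if l < k then c l else 0"], intro allI impI)
    fix t assume "k \<le> k'" "\<forall>t<n. x t = (\<Sum>l<k. c l * f l t)" "t < n"
    have "(\<Sum>l<k'. (if l < k then c l else 0) * f l t) = (\<Sum>l<k'. if l \<in> {..<k} then c l * f l t else 0)"
      by (rule sum.cong) auto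
    also have "\<dots> = (\<Sum>l\<in>{..<k'} \<inter> {..<k}. c l * f l t)" by (rule sum.inter_restrict[symmetric]) simp
    also have "{..<k'} \<inter> {..<k} = {..<k}" using \<open>k \<le> k'\<close> by auto
    finally show "x t = (\<Sum>l<k'. (if l < k then c l else 0) * f l t)" using \<open>\<forall>t<n. _\<close> \<open>t < n\<close> by simp
  qed
  done

lemma spn_sum: "finite L \<Longrightarrow> (\<And>l. l \<in> L \<Longrightarrow> h l \<in> spn f k) \<Longrightarrow> (\<lambda>t. \<Sum>l\<in>L. h l t) \<in> spn f k"
proof (induction L rule: finite_induct)
  case empty
  then show ?case using spn_zero by simp
next
  case (insert a F)
  then show ?case using spn_add[of "h a" f k "\<lambda>t. \<Sum>l\<in>F. h l t"] by simp
qed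

lemma spn_sub: assumes "\<And>l. l < k \<Longrightarrow> g l \<in> spn f k'" and "x \<in> spn g k" shows "x \<in> spn f k'"
proof -
  obtain c where c: "\<And>t. t < n \<Longrightarrow> x t = (\<Sum>l<k. c l * g l t)" using assms(2) unfolding spn_def by auto
  have "(\<lambda>t. \<Sum>l<k. c l * g l t) \<in> spn f k'"
    by (rule spn_sum) (auto intro: spn_scale assms(1))
  then show ?thesis by (rule spn_cong) (simp add: c)
qed

lemma ip_spn_orth: assumes "\<And>l. l < k \<Longrightarrow> ip x (f l) = 0" and "y \<in> spn f k" shows "ip x y = 0"
proof -
  obtain c where c: "\<And>t. t < n \<Longrightarrow> y t = (\<Sum>l<k. c l * f l t)" using assms(2) unfolding spn_def by auto
  have "ip x y = ip x (\<lambda>t. \<Sum>l<k. c l * f l t)" by (rule ip_cong2) (simp add: c)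
  also have "\<dots> = (\<Sum>l<k. c l * ip x (f l))" by (simp add: ip_sum_right ip_scale_right)
  also have "\<dots> = 0" using assms(1) by simp
  finally show ?thesis .
qed

lemma gso_orth_lt: "l < k \<Longrightarrow> ip (gso f k) (gso f l) = 0"
proof (induction k arbitrary: l rule: less_induct)
  case (less k)
  have pair: "ip (gso f l') (gso f l) = 0" if "l' < k" "l < k" "l' \<noteq> l" for l'
  proof (cases "l < l'")
    case True
    then show ?thesis using less.IH[OF that(1) True] by simp
  next
    case False
    then have "l' < l" using that by simp
    then show ?thesis by (subst ip_sym) (rule less.IH[OF less.prems \<open>l' < l\<close>])
  qed
  have "ip (gso f k) (gso f l) = ip (\<lambda>t. f k t - (\<Sum>l'<k. mu f k l' * gso f l' t)) (gso f l)"
    by (rule ip_cong) (simp add: gso_eq[of f k])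
  also have "\<dots> = ip (f k) (gso f l) - (\<Sum>l'<k. mu f k l' * ip (gso f l') (gso f l))"
    by (simp add: ip_diff_left ip_sum_left ip_scale_left)
  also have "(\<Sum>l'<k. mu f k l' * ip (gso f l') (gso f l)) = mu f k l * ip (gso f l) (gso f l)"
    apply (subst sum.remove[of _ l], simp, simp add: less.prems)
    using pair less.prems by (auto intro!: sum.neutral)
  also have "ip (f k) (gso f l) - mu f k l * ip (gso f l) (gso f l) = 0"
  proof (cases "ip (gso f l) (gso f l) = 0")
    case True
    then show ?thesis using ip_zero_right by simp
  next
    case False
    then show ?thesis by (simp add: mu_def)
  qed
  finally show ?case .
qed

lemma gso_orth: assumes "l \<noteq> k" shows "ip (gso f k) (gso f l) = 0"
proof (cases "l < k")
  case True then show ?thesis by (rule gso_orth_lt)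
next
  case False then have "k < l" using assms by simp
  then show ?thesis by (subst ip_sym) (rule gso_orth_lt)
qed

lemma f_minus_gso: "(\<lambda>t. f k t - gso f k t) \<in> spn (gso f) k"
  unfolding spn_def by (rule CollectI, rule exI[of _ "mu f k"]) (simp add: gso_eq[of f k])

lemma gso_in_spn: "gso f k \<in> spn f (Suc k)"
proof (induction k rule: less_induct)
  case (less k)
  have "(\<lambda>t. \<Sum>l<k. mu f k l * gso f l t) \<in> spn f (Suc k)"
    by (rule spn_sum) (auto intro!: spn_scale spn_mono[OF _ less.IH])
  then have "(\<lambda>t. f k t - (\<Sum>l<k. mu f k l * gso f l t)) \<in> spn f (Suc k)"
    by (intro spn_diff spn_gen) auto
  then show ?case by (rule spn_cong) (simp add: gso_eq[of f k])
qed

lemma spn_gso_eq: "spn (gso f) k = spn f k"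
proof
  show "spn (gso f) k \<subseteq> spn f k"
  proof
    fix x assume "x \<in> spn (gso f) k"
    show "x \<in> spn f k"
      by (rule spn_sub[OF _ \<open>x \<in> spn (gso f) k\<close>], rule spn_mono[OF _ gso_in_spn]) simp
  qed
  have "f l \<in> spn (gso f) k" if "l < k" for l
  proof -
    have "(\<lambda>t. (f l t - gso f l t) + gso f l t) \<in> spn (gso f) k"
      by (rule spn_add) (use that in \<open>auto intro: spn_mono[OF _ f_minus_gso] spn_gen\<close>)
    then show ?thesis by (rule spn_cong) simp
  qed
  then show "spn f k \<subseteq> spn (gso f) k"
    by (auto intro: spn_sub)
qed

lemma gso_orth_spn: "y \<in> spn f k \<Longrightarrow> ip (gso f k) y = 0"
  by (rule ip_spn_orth[of k _ "gso f"]) (auto simp: gso_orth_lt spn_gso_eq)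

lemma gso_orth_f: "l < k \<Longrightarrow> ip (gso f k) (f l) = 0"
  by (rule gso_orth_spn) (rule spn_gen)

lemma f_minus_gso': "(\<lambda>t. f k t - gso f k t) \<in> spn f k"
  using f_minus_gso spn_gso_eq by auto

lemma ip_f_gso_self: "ip (f k) (gso f k) = ip (gso f k) (gso f k)"
proof -
  have "ip (f k) (gso f k) = ip (\<lambda>t. (f k t - gso f k t) + gso f k t) (gso f k)" by simp
  also have "\<dots> = ip (\<lambda>t. f k t - gso f k t) (gso f k) + ip (gso f k) (gso f k)"
    by (rule ip_add_left)
  also have "ip (\<lambda>t. f k t - gso f k t) (gso f k) = 0"
    by (subst ip_sym) (rule gso_orth_spn[OF f_minus_gso'])
  finally show ?thesis by simp
qed

lemma ip_f_gso_later: "k < l \<Longrightarrow> ip (f k) (gso f l) = 0"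
  by (subst ip_sym) (rule gso_orth_f)

lemma gso_unique: assumes "(\<lambda>t. f k t - v t) \<in> spn f k" "\<And>l. l < k \<Longrightarrow> ip v (f l) = 0" "t < n"
  shows "v t = gso f k t"
proof -
  let ?d = "\<lambda>t. v t - gso f k t"
  have d: "?d \<in> spn f k"
    using spn_diff[OF f_minus_gso' assms(1), of ] by (rule spn_cong) simp
  have "ip ?d ?d = 0"
    by (rule ip_spn_orth[OF _ d]) (simp add: ip_diff_left assms(2) gso_orth_f)
  from ip_zero[OF this assms(3)] show ?thesis by simp
qed

lemma ip_expand: "ip (\<lambda>t. x t + y t) (\<lambda>t. x t + y t) = ip x x + 2 * ip x y + ip y y"
  by (simp add: ip_add_left ip_add_right ip_sym[of y x])

lemma gso_min: assumes "y \<in> spn f k"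
  shows "ip (gso f k) (gso f k) \<le> ip (\<lambda>t. f k t - y t) (\<lambda>t. f k t - y t)"
proof -
  let ?s = "\<lambda>t. (f k t - gso f k t) - y t"
  have s: "?s \<in> spn f k" by (rule spn_diff[OF f_minus_gso' assms])
  have e: "(\<lambda>t. f k t - y t) = (\<lambda>t. gso f k t + ?s t)" by (rule ext) simp
  have "ip (\<lambda>t. f k t - y t) (\<lambda>t. f k t - y t) = ip (\<lambda>t. gso f k t + ?s t) (\<lambda>t. gso f k t + ?s t)"
    by (simp only: e)
  also have "\<dots> = ip (gso f k) (gso f k) + ip ?s ?s"
    by (subst ip_expand) (simp add: gso_orth_spn[OF s])
  finally show ?thesis using ip_nonneg[of ?s] by simp
qed

lemma norm_decomp: "ip (f k) (f k) = ip (gso f k) (gso f k) + (\<Sum>l<k. (mu f k l)^2 * ip (gso f l) (gso f l))"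
proof -
  let ?S = "\<lambda>t. \<Sum>l<k. mu f k l * gso f l t"
  have fk: "ip (f k) (f k) = ip (\<lambda>t. gso f k t + ?S t) (\<lambda>t. gso f k t + ?S t)"
  proof -
    have "ip (f k) (f k) = ip (\<lambda>t. gso f k t + ?S t) (f k)" by (rule ip_cong) (simp add: gso_eq[of f k])
    also have "\<dots> = ip (\<lambda>t. gso f k t + ?S t) (\<lambda>t. gso f k t + ?S t)" by (rule ip_cong2) (simp add: gso_eq[of f k])
    finally show ?thesis .
  qed
  have a: "ip (gso f k) ?S = 0"
    by (auto simp: ip_sum_right ip_scale_right intro!: sum.neutral gso_orth)
  have b: "ip (gso f l) ?S = mu f k l * ip (gso f l) (gso f l)" if "l < k" for l
    apply (simp add: ip_sum_right ip_scale_right)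
    apply (subst sum.remove[of _ l], simp, simp add: that)
    by (simp add: gso_orth sum.neutral)
  have "ip ?S ?S = (\<Sum>l<k. mu f k l * ip (gso f l) ?S)"
    by (simp add: ip_sum_left ip_scale_left)
  also have "\<dots> = (\<Sum>l<k. (mu f k l)^2 * ip (gso f l) (gso f l))"
    by (rule sum.cong) (simp_all add: b power2_eq_square)
  finally show ?thesis using fk a by (simp add: ip_expand)
qed


lemma spn_local: "(\<And>l t. l < k \<Longrightarrow> t < n \<Longrightarrow> f' l t = f l t) \<Longrightarrow> spn f' k = spn f k"
  unfolding spn_def by (auto intro!: sum.cong)

lemma spn_eq_gen: "(\<And>l. l < k \<Longrightarrow> f' l \<in> spn f k) \<Longrightarrow> (\<And>l. l < k \<Longrightarrow> f l \<in> spn f' k) \<Longrightarrow> spn f' k = spn f k"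
  by (auto intro: spn_sub)

lemma gso_eq_if: assumes "spn f' k = spn f k" "(\<lambda>t. f' k t - f k t) \<in> spn f k" "t < n"
  shows "gso f' k t = gso f k t"
proof -
  have "(\<lambda>t. (f' k t - f k t) + (f k t - gso f k t)) \<in> spn f k"
    by (rule spn_add[OF assms(2) f_minus_gso'])
  then have a: "(\<lambda>t. f' k t - gso f k t) \<in> spn f' k" using assms(1) by (rule_tac spn_cong) auto
  have b: "ip (gso f k) (f' l) = 0" if "l < k" for l
    using gso_orth_spn[of "f' l" f k] spn_gen[OF that, of f'] assms(1) by simp
  show ?thesis using gso_unique[OF a b assms(3)] by simp
qed

lemma gso_local: assumes "\<And>l t. l \<le> k \<Longrightarrow> t < n \<Longrightarrow> f' l t = f l t" "t < n"
  shows "gso f' k t = gso f k t"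
  by (rule gso_eq_if[OF spn_local _ assms(2)]) (use assms(1) in \<open>auto intro: spn_cong[OF spn_zero]\<close>)

lemma gso_tri: assumes "\<And>l. l \<le> k \<Longrightarrow> (\<lambda>t. f' l t - f l t) \<in> spn f l" "t < n"
  shows "gso f' k t = gso f k t"
proof -
  have sub: "spn f' k' \<subseteq> spn f k'" if "k' \<le> k" for k'
  proof -
    have "f' l \<in> spn f k'" if "l < k'" for l
    proof -
      have "(\<lambda>t. f l t + (f' l t - f l t)) \<in> spn f k'"
        by (rule spn_add[OF spn_gen[OF that] spn_mono[OF _ assms(1)]]) (use that \<open>k' \<le> k\<close> in auto)
      then show ?thesis by (rule spn_cong) simp
    qed
    then show ?thesis by (auto intro: spn_sub)
  qed
  have eq: "spn f' k' = spn f k'" if "k' \<le> k" for k'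
    using that
  proof (induction k' rule: less_induct)
    case (less k')
    have "f l \<in> spn f' k'" if "l < k'" for l
    proof -
      have "(\<lambda>t. f' l t - f l t) \<in> spn f' l" using assms(1)[of l] less.IH[of l] that less.prems by auto
      then have d: "(\<lambda>t. f' l t - f l t) \<in> spn f' k'"
        by (rule spn_mono[rotated]) (use that in auto)
      have "(\<lambda>t. f' l t - (f' l t - f l t)) \<in> spn f' k'" by (rule spn_diff[OF spn_gen[OF that] d])
      then show ?thesis by (rule spn_cong) simp
    qed
    then show ?case using sub[OF less.prems] by (auto intro: spn_sub)
  qed
  show ?thesis by (rule gso_eq_if[OF eq assms(1) assms(2)]) simp_all
qed

lemma ip_lin2: "ip (\<lambda>t. x t - c * y t) (\<lambda>t. x t - c * y t) = ip x x - 2 * c * ip x y + c^2 * ip y y"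
proof -
  have "ip (\<lambda>t. x t - c * y t) (\<lambda>t. x t - c * y t) = ip x x - c * ip x y - (c * ip y x - c * (c * ip y y))"
    by (simp only: ip_diff_left ip_diff_right ip_scale_left ip_scale_right)
  then show ?thesis by (simp add: ip_sym[of y x] power2_eq_square algebra_simps)
qed


lemma gso_swp_lt: "l < j \<Longrightarrow> t < n \<Longrightarrow> gso (swp f j) l t = gso f l t"
  by (rule gso_local) (auto simp: swp_def)

lemma gso_swp_gt: assumes "Suc j < l" "t < n" shows "gso (swp f j) l t = gso f l t"
proof (rule gso_eq_if[OF spn_eq_gen _ assms(2)])
  show "swp f j l' \<in> spn f l" if "l' < l" for l'
    using that assms(1) by (auto simp: swp_def intro!: spn_gen)
  show "f l' \<in> spn (swp f j) l" if "l' < l" for l'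
  proof -
    consider "l' = j" | "l' = Suc j" | "l' \<noteq> j" "l' \<noteq> Suc j" by blast
    then show ?thesis
    proof cases
      case 1 then have "swp f j (Suc j) = f l'" by (simp add: swp_def)
      then show ?thesis using spn_gen[of "Suc j" l "swp f j"] assms(1) by simp
    next
      case 2 then have "swp f j j = f l'" by (simp add: swp_def)
      then show ?thesis using spn_gen[of j l "swp f j"] assms(1) by simp
    next
      case 3 then have "swp f j l' = f l'" by (simp add: swp_def)
      then show ?thesis using spn_gen[of l' l "swp f j"] that by simp
    qed
  qed
  show "(\<lambda>t. swp f j l t - f l t) \<in> spn f l" using assms(1) by (simp add: swp_def spn_zero)
qed

context
  fixes f j
  assumes A: "ip (gso f j) (gso f j) > 0" and C: "ip (gso f (Suc j)) (gso f (Suc j)) > 0"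
begin

definition "mm = mu f (Suc j) j"
definition "vv = (\<lambda>t. gso f (Suc j) t + mm * gso f j t)"
definition "vv2 = (\<lambda>t. gso f j t - (ip (gso f j) vv / ip vv vv) * vv t)"

lemma ip_fSuc_gj: "ip (f (Suc j)) (gso f j) = mm * ip (gso f j) (gso f j)"
  using A by (simp add: mm_def mu_def)

lemma vv_orth: "l < j \<Longrightarrow> ip vv (f l) = 0"
  by (simp add: vv_def ip_add_left ip_scale_left gso_orth_f)

lemma vv_norm: "ip vv vv = ip (gso f (Suc j)) (gso f (Suc j)) + mm^2 * ip (gso f j) (gso f j)"
  unfolding vv_def
  by (simp add: ip_add_left ip_add_right ip_scale_left ip_scale_right gso_orth power2_eq_square)

lemma vv_pos: "ip vv vv > 0"
  using vv_norm C A by (simp add: add_pos_nonneg)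

lemma gso_swp_j: "t < n \<Longrightarrow> gso (swp f j) j t = vv t"
proof (rule sym, rule gso_unique)
  have sl: "spn (swp f j) j = spn f j" by (rule spn_local) (simp add: swp_def)
  have "(\<lambda>t. f (Suc j) t - gso f (Suc j) t) \<in> spn (gso f) (Suc j)" by (rule f_minus_gso)
  have e: "f (Suc j) t - vv t = (\<Sum>l<j. mu f (Suc j) l * gso f l t)" for t
    by (simp add: vv_def gso_eq[of f "Suc j"] mm_def)
  have "(\<lambda>t. \<Sum>l<j. mu f (Suc j) l * gso f l t) \<in> spn (gso f) j"
    by (rule spn_sum) (auto intro: spn_scale spn_gen)
  then have "(\<lambda>t. f (Suc j) t - vv t) \<in> spn f j" using spn_gso_eq e by simp
  then show "(\<lambda>t. swp f j j t - vv t) \<in> spn (swp f j) j" using sl by (simp add: swp_def)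
  show "ip vv (swp f j l) = 0" if "l < j" for l using that vv_orth by (simp add: swp_def)
qed

lemma ip_gj_vv: "ip (gso f j) vv = mm * ip (gso f j) (gso f j)"
  unfolding vv_def by (simp add: ip_add_right ip_scale_right gso_orth)

lemma ip_vv_fSuc: "ip vv (f (Suc j)) = ip vv vv"
proof -
  have "ip vv (f (Suc j)) = ip (gso f (Suc j)) (f (Suc j)) + mm * ip (gso f j) (f (Suc j))"
    by (simp add: vv_def ip_add_left ip_scale_left)
  also have "\<dots> = ip (gso f (Suc j)) (gso f (Suc j)) + mm^2 * ip (gso f j) (gso f j)"
    using ip_f_gso_self[of f "Suc j"] ip_fSuc_gj by (simp add: ip_sym power2_eq_square)
  finally show ?thesis using vv_norm by simp
qed

lemma gso_swp_Suc: "t < n \<Longrightarrow> gso (swp f j) (Suc j) t = vv2 t"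
proof (rule sym, rule gso_unique)
  let ?c = "ip (gso f j) vv / ip vv vv"
  have vin: "vv \<in> spn (swp f j) (Suc j)"
    using gso_in_spn[of "swp f j" j] by (rule spn_cong) (simp add: gso_swp_j)
  have sl: "spn (swp f j) j = spn f j" by (rule spn_local) (simp add: swp_def)
  have "(\<lambda>t. f j t - gso f j t) \<in> spn (swp f j) (Suc j)"
    using f_minus_gso'[of f j] sl spn_mono[of j "Suc j" _ "swp f j"] by auto
  then have "(\<lambda>t. (f j t - gso f j t) + ?c * vv t) \<in> spn (swp f j) (Suc j)"
    by (intro spn_add spn_scale vin)
  then show "(\<lambda>t. swp f j (Suc j) t - vv2 t) \<in> spn (swp f j) (Suc j)"
    by (rule spn_cong) (simp add: swp_def vv2_def)
  show "ip vv2 (swp f j l) = 0" if "l < Suc j" for l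
  proof (cases "l = j")
    case True
    have "ip vv2 (f (Suc j)) = ip (gso f j) (f (Suc j)) - ?c * ip vv (f (Suc j))"
      by (simp only: vv2_def ip_diff_left ip_scale_left)
    also have "\<dots> = 0" using ip_vv_fSuc ip_gj_vv ip_fSuc_gj vv_pos by (simp add: ip_sym)
    finally show ?thesis using True by (simp add: swp_def)
  next
    case False
    then have "l < j" using that by simp
    have "ip vv2 (f l) = ip (gso f j) (f l) - ?c * ip vv (f l)"
      by (simp only: vv2_def ip_diff_left ip_scale_left)
    then show ?thesis using \<open>l < j\<close> False
      by (simp add: swp_def gso_orth_f vv_orth)
  qed
qed

lemma vv2_norm: "ip vv2 vv2 = ip (gso f j) (gso f j) * ip (gso f (Suc j)) (gso f (Suc j)) / ip vv vv"
proof -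
  let ?A = "ip (gso f j) (gso f j)" and ?C = "ip (gso f (Suc j)) (gso f (Suc j))" and ?V = "ip vv vv"
  have "ip vv2 vv2 = ?A - 2 * (ip (gso f j) vv / ?V) * ip (gso f j) vv + (ip (gso f j) vv / ?V)^2 * ?V"
    unfolding vv2_def ip_lin2 by simp
  also have "\<dots> = ?A - (mm * ?A)^2 / ?V" using vv_pos ip_gj_vv by (simp add: power2_eq_square field_simps)
  also have "\<dots> = ?A * ?C / ?V" using vv_pos vv_norm by (simp add: power2_eq_square field_simps)
  finally show ?thesis .
qed

end

end


locale lll = gsl +
  fixes r :: nat and Good :: "(nat \<Rightarrow> nat \<Rightarrow> int) \<Rightarrow> bool"
  assumes good_tri: "\<And>B B' c. Good B \<Longrightarrow> (\<And>k t. k < r \<Longrightarrow> t < n \<Longrightarrow> B' k t = B k t + (\<Sum>l<k. c k l * B l t)) \<Longrightarrow> Good B'"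
  and good_swp: "\<And>B j. Good B \<Longrightarrow> Suc j < r \<Longrightarrow> Good (swp B j)"
begin

definition rv :: "(nat \<Rightarrow> nat \<Rightarrow> int) \<Rightarrow> nat \<Rightarrow> nat \<Rightarrow> real" where
  "rv B = (\<lambda>l t. real_of_int (B l t))"

definition G :: "(nat \<Rightarrow> nat \<Rightarrow> int) \<Rightarrow> nat \<Rightarrow> real" where
  "G B k = ip (gso (rv B) k) (gso (rv B) k)"

lemma G_nonneg: "G B k \<ge> 0" unfolding G_def by (rule ip_nonneg)

lemma rv_swp: "rv (swp B j) = swp (rv B) j"
  unfolding rv_def swp_def by (rule ext)+ simp

lemma nearest_plane:
  fixes x :: "nat \<Rightarrow> int"
  shows "\<exists>c. \<forall>l<k. \<bar>ip (\<lambda>t. of_int (x t + (\<Sum>l'<k. c l' * B l' t))) (gso (rv B) l)\<bar> \<le> G B l / 2"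
proof -
  let ?P = "\<lambda>c l. \<bar>ip (\<lambda>t. of_int (x t + (\<Sum>l'<k. c l' * B l' t))) (gso (rv B) l)\<bar> \<le> G B l / 2"
  have "\<forall>s\<le>k. \<exists>c. \<forall>l. k - s \<le> l \<and> l < k \<longrightarrow> ?P c l"
  proof (intro allI impI)
    fix s assume "s \<le> k"
    then show "\<exists>c. \<forall>l. k - s \<le> l \<and> l < k \<longrightarrow> ?P c l"
    proof (induction s)
      case 0
      then show ?case by auto
    next
      case (Suc s)
      then obtain c where c: "\<And>l. k - s \<le> l \<Longrightarrow> l < k \<Longrightarrow> ?P c l" by auto
      define j where "j = k - Suc s"
      have jk: "j < k" using Suc.prems by (simp add: j_def)
      define x' where "x' = (\<lambda>t. x t + (\<Sum>l'<k. c l' * B l' t))"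
      define q where "q = ip (\<lambda>t. of_int (x' t)) (gso (rv B) j) / G B j"
      define c' where "c' = (\<lambda>l. c l - (if l = j then round q else 0))"
      have sum_c': "x t + (\<Sum>l'<k. c' l' * B l' t) = x' t - round q * B j t" for t
      proof -
        have "(\<Sum>l'<k. c' l' * B l' t) = (\<Sum>l'<k. c l' * B l' t) - (\<Sum>l'<k. (if l' = j then round q else 0) * B l' t)"
          by (simp add: c'_def algebra_simps sum_subtractf)
        also have "(\<Sum>l'<k. (if l' = j then round q else 0) * B l' t) = (\<Sum>l'<k. if l' = j then round q * B l' t else 0)"
          by (rule sum.cong) auto
        also have "\<dots> = round q * B j t" using jk by simp
        finally show ?thesis by (simp add: x'_def)
      qed
      have ipc': "ip (\<lambda>t. of_int (x t + (\<Sum>l'<k. c' l' * B l' t))) g =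
          ip (\<lambda>t. of_int (x' t)) g - of_int (round q) * ip (rv B j) g" for g
      proof -
        have "ip (\<lambda>t. of_int (x t + (\<Sum>l'<k. c' l' * B l' t))) g = ip (\<lambda>t. of_int (x' t) - of_int (round q) * rv B j t) g"
          by (simp add: sum_c' rv_def)
        also have "\<dots> = ip (\<lambda>t. of_int (x' t)) g - of_int (round q) * ip (rv B j) g"
          by (simp only: ip_diff_left ip_scale_left)
        finally show ?thesis .
      qed
      have "?P c' l" if "k - Suc s \<le> l" "l < k" for l
      proof (cases "l = j")
        case True
        have "ip (rv B j) (gso (rv B) j) = G B j" unfolding G_def by (rule ip_f_gso_self)
        then have e: "ip (\<lambda>t. of_int (x t + (\<Sum>l'<k. c' l' * B l' t))) (gso (rv B) j) =
            ip (\<lambda>t. of_int (x' t)) (gso (rv B) j) - of_int (round q) * G B j" using ipc' by simp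
        show ?thesis
        proof (cases "G B j = 0")
          case True
          then have "ip y (gso (rv B) j) = 0" for y using ip_zero_right unfolding G_def by blast
          then show ?thesis using \<open>l = j\<close> True by simp
        next
          case False
          then have Gp: "G B j > 0" using G_nonneg[of B j] by simp
          have "ip (\<lambda>t. of_int (x' t)) (gso (rv B) j) - of_int (round q) * G B j = (q - of_int (round q)) * G B j"
            using False by (simp add: q_def field_simps)
          moreover have "\<bar>q - of_int (round q)\<bar> \<le> 1/2" using of_int_round_abs_le[of q] by (simp add: abs_minus_commute)
          ultimately have "\<bar>ip (\<lambda>t. of_int (x' t)) (gso (rv B) j) - of_int (round q) * G B j\<bar> \<le> 1/2 * G B j"
            using Gp by (simp add: abs_mult mult_right_mono)
          then show ?thesis using e \<open>l = j\<close> by simp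
        qed
      next
        case False
        then have "j < l" using that by (simp add: j_def)
        then have "ip (rv B j) (gso (rv B) l) = 0" by (rule ip_f_gso_later)
        then have "ip (\<lambda>t. of_int (x t + (\<Sum>l'<k. c' l' * B l' t))) (gso (rv B) l) = ip (\<lambda>t. of_int (x' t)) (gso (rv B) l)"
          using ipc' by simp
        moreover have "k - s \<le> l" using \<open>j < l\<close> by (simp add: j_def)
        ultimately show ?thesis using c[of l] that by (simp add: x'_def)
      qed
      then show ?case by blast
    qed
  qed
  then show ?thesis by force
qed


definition red :: "(nat \<Rightarrow> nat \<Rightarrow> int) \<Rightarrow> (nat \<Rightarrow> nat \<Rightarrow> int) \<Rightarrow> nat \<Rightarrow> nat \<Rightarrow> int" where
  "red B c = (\<lambda>k t. if k < r \<and> t < n then B k t + (\<Sum>l<k. c k l * B l t) else 0)"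

lemma red_gso: assumes "k < r" "t < n" shows "gso (rv (red B c)) k t = gso (rv B) k t"
proof (rule gso_tri[OF _ assms(2)])
  fix l assume "l \<le> k"
  then have "l < r" using assms by simp
  show "(\<lambda>t. rv (red B c) l t - rv B l t) \<in> spn (rv B) l"
    unfolding spn_def
    by (rule CollectI, rule exI[of _ "\<lambda>l'. of_int (c l l')"]) (simp add: red_def rv_def \<open>l < r\<close>)
qed

lemma red_G: "k < r \<Longrightarrow> G (red B c) k = G B k"
  unfolding G_def by (rule trans[OF ip_cong ip_cong2]) (simp_all add: red_gso)

lemma red_good: "Good B \<Longrightarrow> Good (red B c)"
  by (rule good_tri[of B _ c]) (simp_all add: red_def)

lemma red_mu: assumes "k < r" "l < k" shows "mu (rv (red B c)) k l = ip (rv (red B c) k) (gso (rv B) l) / G B l"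
proof -
  have lr: "l < r" using assms by simp
  have "ip (rv (red B c) k) (gso (rv (red B c)) l) = ip (rv (red B c) k) (gso (rv B) l)"
    by (rule ip_cong2) (simp add: red_gso lr)
  then show ?thesis using red_G[OF lr, of B c] unfolding mu_def G_def by simp
qed

lemma size_reduce: "\<exists>c. \<forall>k<r. \<forall>l<k. \<bar>mu (rv (red B c)) k l\<bar> \<le> 1/2 \<or> G B l = 0"
proof -
  have "\<forall>k. \<exists>c. \<forall>l<k. \<bar>ip (\<lambda>t. of_int (B k t + (\<Sum>l'<k. c l' * B l' t))) (gso (rv B) l)\<bar> \<le> G B l / 2"
  proof
    fix k show "\<exists>c. \<forall>l<k. \<bar>ip (\<lambda>t. of_int (B k t + (\<Sum>l'<k. c l' * B l' t))) (gso (rv B) l)\<bar> \<le> G B l / 2"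
      by (rule nearest_plane)
  qed
  from choice[OF this] obtain c where c0: "\<forall>k. \<forall>l<k. \<bar>ip (\<lambda>t. of_int (B k t + (\<Sum>l'<k. c k l' * B l' t))) (gso (rv B) l)\<bar> \<le> G B l / 2"
    by blast
  then have c: "\<And>k l. l < k \<Longrightarrow> \<bar>ip (\<lambda>t. of_int (B k t + (\<Sum>l'<k. c k l' * B l' t))) (gso (rv B) l)\<bar> \<le> G B l / 2"
    by blast
  have "\<bar>mu (rv (red B c)) k l\<bar> \<le> 1/2 \<or> G B l = 0" if "k < r" "l < k" for k l
  proof (cases "G B l = 0")
    case False
    then have Gp: "G B l > 0" using G_nonneg[of B l] by simp
    have "ip (rv (red B c) k) (gso (rv B) l) = ip (\<lambda>t. of_int (B k t + (\<Sum>l'<k. c k l' * B l' t))) (gso (rv B) l)"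
      by (rule ip_cong) (simp add: red_def rv_def that)
    then have "\<bar>ip (rv (red B c) k) (gso (rv B) l)\<bar> \<le> G B l / 2" using c[OF that(2)] by simp
    moreover have "\<bar>mu (rv (red B c)) k l\<bar> = \<bar>ip (rv (red B c) k) (gso (rv B) l)\<bar> / G B l"
      using red_mu[OF that] Gp by (simp add: abs_divide)
    ultimately show ?thesis using Gp by (simp add: pos_divide_le_eq)
  qed simp
  then show ?thesis by blast
qed

lemma prod_split2:
  fixes h :: "nat \<Rightarrow> real"
  assumes "Suc j < r" shows "(\<Prod>k<r. h k) = (\<Prod>k\<in>{..<r}-{j,Suc j}. h k) * (h j * h (Suc j))"
proof -
  have "(\<Prod>k<r. h k) = h j * (\<Prod>k\<in>{..<r}-{j}. h k)" using assms by (intro prod.remove) auto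
  also have "(\<Prod>k\<in>{..<r}-{j}. h k) = h (Suc j) * (\<Prod>k\<in>{..<r}-{j}-{Suc j}. h k)" using assms by (intro prod.remove) auto
  also have "{..<r}-{j}-{Suc j} = {..<r}-{j,Suc j}" by auto
  finally show ?thesis by (simp add: mult_ac)
qed

lemma G_swp:
  assumes "G B j > 0" "G B (Suc j) > 0"
  shows "G (swp B j) j = G B (Suc j) + (mu (rv B) (Suc j) j)^2 * G B j"
    and "G (swp B j) (Suc j) = G B j * G B (Suc j) / G (swp B j) j"
    and "i \<noteq> j \<Longrightarrow> i \<noteq> Suc j \<Longrightarrow> G (swp B j) i = G B i"
proof -
  have A: "ip (gso (rv B) j) (gso (rv B) j) > 0" and C: "ip (gso (rv B) (Suc j)) (gso (rv B) (Suc j)) > 0"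
    using assms unfolding G_def by auto
  have gj: "G (swp B j) j = ip (vv (rv B) j) (vv (rv B) j)"
    unfolding G_def rv_swp by (rule trans[OF ip_cong ip_cong2]) (simp_all add: gso_swp_j[OF A C])
  show 1: "G (swp B j) j = G B (Suc j) + (mu (rv B) (Suc j) j)^2 * G B j"
    unfolding gj vv_norm[OF A C] by (simp add: G_def mm_def[OF A C])
  have "G (swp B j) (Suc j) = ip (vv2 (rv B) j) (vv2 (rv B) j)"
    unfolding G_def rv_swp by (rule trans[OF ip_cong ip_cong2]) (simp_all add: gso_swp_Suc[OF A C])
  then show "G (swp B j) (Suc j) = G B j * G B (Suc j) / G (swp B j) j"
    unfolding vv2_norm[OF A C] gj by (simp add: G_def)
  assume "i \<noteq> j" "i \<noteq> Suc j"
  then consider "i < j" | "Suc j < i" by linarith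
  then show "G (swp B j) i = G B i"
  proof cases
    case 1 then show ?thesis unfolding G_def rv_swp
      by (rule_tac trans[OF ip_cong ip_cong2]) (simp_all add: gso_swp_lt)
  next
    case 2 then show ?thesis unfolding G_def rv_swp
      by (rule_tac trans[OF ip_cong ip_cong2]) (simp_all add: gso_swp_gt)
  qed
qed


lemma finite_fams:
  fixes K :: int
  shows "finite {B :: nat \<Rightarrow> nat \<Rightarrow> int. (\<forall>k t. \<not>(k < r \<and> t < n) \<longrightarrow> B k t = 0) \<and> (\<forall>k<r. \<forall>t<n. \<bar>B k t\<bar> \<le> K)}"
proof -
  let ?f = "\<lambda>xs k t. if k < r \<and> t < n then xs ! (k*n+t) else (0::int)"
  let ?L = "{xs. set xs \<subseteq> {-K..K} \<and> length xs = r*n}"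
  have fin: "finite (?f ` ?L)" by (intro finite_imageI finite_lists_length_eq) simp
  have "B \<in> ?f ` ?L" if B: "\<forall>k t. \<not>(k < r \<and> t < n) \<longrightarrow> B k t = 0" "\<forall>k<r. \<forall>t<n. \<bar>B k t\<bar> \<le> K" for B
  proof
    let ?xs = "map (\<lambda>q. B (q div n) (q mod n)) [0..<r*n]"
    have idx: "k * n + t < r * n" if "k < r" "t < n" for k t
    proof -
      have "k * n + t < k * n + n" using that by simp
      also have "\<dots> = Suc k * n" by simp
      also have "\<dots> \<le> r * n" using that by (intro mult_right_mono) auto
      finally show ?thesis .
    qed
    show "B = ?f ?xs"
    proof (intro ext)
      fix k t
      show "B k t = ?f ?xs k t"
      proof (cases "k < r \<and> t < n")
        case True
        then show ?thesis using idx[of k t] by simp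
      next
        case False
        then show ?thesis using B(1) by auto
      qed
    qed
    have "B (q div n) (q mod n) \<in> {-K..K}" if "q < r * n" for q
    proof -
      have "n > 0" using that by (cases n) auto
      then have "q mod n < n" by simp
      moreover have "q div n < r" using that by (simp add: less_mult_imp_div_less)
      ultimately have "\<bar>B (q div n) (q mod n)\<bar> \<le> K" using B(2) by blast
      then show ?thesis by (simp add: abs_le_iff)
    qed
    then show "?xs \<in> ?L" by auto
  qed
  then have "{B :: nat \<Rightarrow> nat \<Rightarrow> int. (\<forall>k t. \<not>(k < r \<and> t < n) \<longrightarrow> B k t = 0) \<and> (\<forall>k<r. \<forall>t<n. \<bar>B k t\<bar> \<le> K)} \<subseteq> ?f ` ?L"
    by blast
  then show ?thesis using fin by (rule finite_subset)
qed

theorem lll_exists: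
  assumes gU: "Good U" and pU: "\<forall>k<r. G U k > 0"
  shows "\<exists>B. Good B \<and> (\<forall>k<r. G B k > 0) \<and> (\<Prod>k<r. G B k) \<le> (\<Prod>k<r. G U k)
     \<and> (\<forall>k<r. ip (rv B k) (rv B k) \<le> 2^(2*k+1) * G B k)"
proof -
  define M0 where "M0 = (\<Sum>k<r. G U k)"
  define P0 where "P0 = (\<Prod>k<r. G U k)"
  define F where "F = {B. Good B \<and> (\<forall>k<r. 0 < G B k \<and> G B k \<le> M0) \<and> (\<Prod>k<r. G B k) \<le> P0
     \<and> (\<forall>k<r. \<forall>l<k. \<bar>mu (rv B) k l\<bar> \<le> 1/2) \<and> (\<forall>k t. \<not>(k < r \<and> t < n) \<longrightarrow> B k t = 0)}"
  define \<Phi> where "\<Phi> = (\<lambda>B. \<Prod>k<r. (G B k)^(r - k))"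
  have M0: "G U k \<le> M0" if "k < r" for k
    unfolding M0_def using that G_nonneg by (intro member_le_sum) auto
  obtain c0 where c0: "\<forall>k<r. \<forall>l<k. \<bar>mu (rv (red U c0)) k l\<bar> \<le> 1/2 \<or> G U l = 0"
    using size_reduce by blast
  have "red U c0 \<in> F"
    unfolding F_def
  proof (intro CollectI conjI allI impI)
    show "Good (red U c0)" by (rule red_good[OF gU])
    fix k assume "k < r"
    then show "0 < G (red U c0) k" "G (red U c0) k \<le> M0" using red_G pU M0 by auto
  next
    have "(\<Prod>k<r. G (red U c0) k) = P0" unfolding P0_def by (rule prod.cong) (auto simp: red_G)
    then show "(\<Prod>k<r. G (red U c0) k) \<le> P0" by simp
  next
    fix k l assume "k < r" "l < k"
    from c0 this have "\<bar>mu (rv (red U c0)) k l\<bar> \<le> 1/2 \<or> G U l = 0" by blast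
    moreover have "G U l > 0" using pU \<open>k < r\<close> \<open>l < k\<close> by simp
    ultimately show "\<bar>mu (rv (red U c0)) k l\<bar> \<le> 1/2" by simp
  next
    fix k t assume "\<not> (k < r \<and> t < n)"
    then show "red U c0 k t = 0" by (auto simp: red_def)
  qed
  then have Fne: "F \<noteq> {}" by auto
  define K where "K = \<lceil>(1 + real r) * M0\<rceil>"
  have Fbd: "\<bar>B k t\<bar> \<le> K" if "B \<in> F" "k < r" "t < n" for B k t
  proof -
    have BF: "\<forall>k<r. 0 < G B k \<and> G B k \<le> M0" "\<forall>k<r. \<forall>l<k. \<bar>mu (rv B) k l\<bar> \<le> 1/2"
      using that(1) unfolding F_def by auto
    have "ip (rv B k) (rv B k) = G B k + (\<Sum>l<k. (mu (rv B) k l)^2 * G B l)"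
      unfolding G_def by (rule norm_decomp)
    also have "\<dots> \<le> M0 + (\<Sum>l<k. M0)"
    proof (intro add_mono sum_mono)
      show "G B k \<le> M0" using BF that by auto
      fix l assume "l \<in> {..<k}"
      then have lk: "l < k" by simp
      have "\<bar>mu (rv B) k l\<bar> \<le> 1/2" using BF(2) that(2) lk by auto
      then have "\<bar>mu (rv B) k l\<bar>^2 \<le> (1/2)^2" by (intro power_mono) auto
      then have "(mu (rv B) k l)^2 \<le> 1" by (simp add: power2_eq_square)
      moreover have "0 \<le> G B l" by (rule G_nonneg)
      moreover have "G B l \<le> M0" using BF lk that(2) by auto
      ultimately show "(mu (rv B) k l)^2 * G B l \<le> M0"
        using mult_right_mono[of "(mu (rv B) k l)^2" 1 "G B l"] by simp
    qed
    also have "\<dots> \<le> (1 + real r) * M0"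
    proof -
      have "M0 \<ge> 0" using BF that(2) G_nonneg[of B k] by force
      then have "real k * M0 \<le> real r * M0" using that(2) by (intro mult_right_mono) auto
      then show ?thesis by (simp add: algebra_simps)
    qed
    finally have ipb: "ip (rv B k) (rv B k) \<le> (1 + real r) * M0" .
    have "w t * (rv B k t)^2 \<le> ip (rv B k) (rv B k)" by (rule ip_coord_le[OF that(3)])
    moreover have "(rv B k t)^2 \<le> w t * (rv B k t)^2"
      using mult_right_mono[of 1 "w t" "(rv B k t)^2"] w_ge1[OF that(3)] by simp
    ultimately have "real_of_int ((B k t)^2) \<le> (1 + real r) * M0" using ipb by (simp add: rv_def)
    moreover have "\<bar>B k t\<bar> \<le> (B k t)^2"
    proof (cases "B k t = 0")
      case False then have "1 \<le> \<bar>B k t\<bar>" by simp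
      then have "\<bar>B k t\<bar> * 1 \<le> \<bar>B k t\<bar> * \<bar>B k t\<bar>" by (intro mult_left_mono) auto
      also have "\<bar>B k t\<bar> * \<bar>B k t\<bar> = (B k t)^2" by (simp add: power2_eq_square abs_mult[symmetric])
      finally show ?thesis by simp
    qed simp
    ultimately have "real_of_int \<bar>B k t\<bar> \<le> (1 + real r) * M0"
      using of_int_le_iff[of "\<bar>B k t\<bar>" "(B k t)^2"] by linarith
    then show ?thesis unfolding K_def by linarith
  qed
  have Ffin: "finite F"
    by (rule finite_subset[OF _ finite_fams[of K]]) (auto simp: F_def Fbd)
  define m where "m = Min (\<Phi> ` F)"
  have "m \<in> \<Phi> ` F" unfolding m_def using Ffin Fne by (intro Min_in) auto
  then obtain B where BF: "B \<in> F" and Bm: "\<Phi> B = m" by auto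
  have Bmin: "\<Phi> B \<le> \<Phi> B'" if "B' \<in> F" for B'
    unfolding Bm m_def using Ffin that by (intro Min_le) auto
  have Bprops: "Good B" "\<forall>k<r. 0 < G B k \<and> G B k \<le> M0" "(\<Prod>k<r. G B k) \<le> P0"
     "\<forall>k<r. \<forall>l<k. \<bar>mu (rv B) k l\<bar> \<le> 1/2"
    using BF unfolding F_def by auto
  have musq: "(mu (rv B) k l)^2 \<le> 1/4" if "k < r" "l < k" for k l
  proof -
    have "\<bar>mu (rv B) k l\<bar> \<le> 1/2" using Bprops(4) that by auto
    then have "\<bar>mu (rv B) k l\<bar>^2 \<le> (1/2)^2" by (intro power_mono) auto
    then show ?thesis by (simp add: power2_eq_square)
  qed
  have lov: "3/4 * G B j \<le> G B (Suc j) + (mu (rv B) (Suc j) j)^2 * G B j" if "Suc j < r" for j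
  proof (rule ccontr)
    assume neg: "\<not> ?thesis"
    define A where "A = G B j"
    define C where "C = G B (Suc j)"
    define \<mu> where "\<mu> = mu (rv B) (Suc j) j"
    have Ap: "A > 0" and Cp: "C > 0" and AM: "A \<le> M0" using Bprops(2) that by (auto simp: A_def C_def)
    define B1 where "B1 = swp B j"
    define A' where "A' = C + \<mu>^2 * A"
    define C' where "C' = A * C / A'"
    have GB1: "G B1 j = A'" "G B1 (Suc j) = C'" "\<And>i. i \<noteq> j \<Longrightarrow> i \<noteq> Suc j \<Longrightarrow> G B1 i = G B i"
      using G_swp[of B j] Ap Cp by (auto simp: A_def C_def \<mu>_def A'_def C'_def B1_def)
    have A'lt: "A' < 3/4 * A" using neg by (simp add: A'_def A_def C_def \<mu>_def)
    have A'p: "A' > 0" using Cp Ap by (simp add: A'_def add_pos_nonneg)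
    have CA': "C \<le> A'" using Ap by (simp add: A'_def)
    have C'p: "C' > 0" using Ap Cp A'p by (simp add: C'_def)
    have C'le: "C' \<le> A"
    proof -
      have "A * C \<le> A * A'" using CA' Ap by simp
      then show ?thesis using A'p by (simp add: C'_def pos_divide_le_eq mult.commute)
    qed
    have AC: "A' * C' = A * C" using A'p by (simp add: C'_def)
    have gB1: "Good B1" using good_swp[OF Bprops(1) that] by (simp add: B1_def)
    have posB1: "0 < G B1 k \<and> G B1 k \<le> M0" if "k < r" for k
    proof -
      consider "k = j" | "k = Suc j" | "k \<noteq> j" "k \<noteq> Suc j" by blast
      then show ?thesis
      proof cases
        case 1 then show ?thesis using GB1 A'p A'lt AM by simp
      next
        case 2 then show ?thesis using GB1 C'p C'le AM by simp
      next
        case 3 then show ?thesis using GB1(3)[OF 3] Bprops(2) that by simp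
      qed
    qed
    obtain c where c: "\<forall>k<r. \<forall>l<k. \<bar>mu (rv (red B1 c)) k l\<bar> \<le> 1/2 \<or> G B1 l = 0"
      using size_reduce by blast
    define B2 where "B2 = red B1 c"
    have GB2: "G B2 k = G B1 k" if "k < r" for k using red_G[OF that] by (simp add: B2_def)
    have rest: "(\<Prod>k\<in>{..<r}-{j,Suc j}. h (G B1 k)) = (\<Prod>k\<in>{..<r}-{j,Suc j}. h (G B k))" for h :: "real \<Rightarrow> real"
      by (rule prod.cong) (auto simp: GB1(3))
    have "(\<Prod>k<r. G B2 k) = (\<Prod>k<r. G B1 k)" by (rule prod.cong) (auto simp: GB2)
    also have "\<dots> = (\<Prod>k\<in>{..<r}-{j,Suc j}. G B1 k) * (G B1 j * G B1 (Suc j))" by (rule prod_split2[OF that])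
    also have "\<dots> = (\<Prod>k\<in>{..<r}-{j,Suc j}. G B k) * (G B j * G B (Suc j))"
      using rest[of "\<lambda>x. x"] GB1 AC by (simp add: A_def C_def)
    also have "\<dots> = (\<Prod>k<r. G B k)" by (rule prod_split2[OF that, symmetric])
    finally have prodeq: "(\<Prod>k<r. G B2 k) = (\<Prod>k<r. G B k)" .
    have "B2 \<in> F"
      unfolding F_def
    proof (intro CollectI conjI allI impI)
      show "Good B2" unfolding B2_def by (rule red_good[OF gB1])
      fix k assume "k < r"
      then show "0 < G B2 k" "G B2 k \<le> M0" using GB2 posB1 by auto
    next
      show "(\<Prod>k<r. G B2 k) \<le> P0" using prodeq Bprops(3) by simp
    next
      fix k l assume "k < r" "l < k"
      from c this have "\<bar>mu (rv B2) k l\<bar> \<le> 1/2 \<or> G B1 l = 0" unfolding B2_def by blast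
      moreover have "G B1 l > 0" using posB1[of l] \<open>k < r\<close> \<open>l < k\<close> by simp
      ultimately show "\<bar>mu (rv B2) k l\<bar> \<le> 1/2" by simp
    next
      fix k t assume "\<not> (k < r \<and> t < n)"
      then show "B2 k t = 0" by (auto simp: B2_def red_def)
    qed
    have rpos: "(\<Prod>k\<in>{..<r}-{j,Suc j}. (G B k)^(r-k)) > 0"
      using Bprops(2) by (intro prod_pos) auto
    define e where "e = r - Suc j"
    have ej: "r - j = Suc e" using that by (simp add: e_def)
    have r1: "(\<Prod>k\<in>{..<r}-{j,Suc j}. (G B1 k)^(r-k)) = (\<Prod>k\<in>{..<r}-{j,Suc j}. (G B k)^(r-k))"
      by (rule prod.cong) (auto simp: GB1(3))
    have r2: "(G B1 j)^(r-j) * (G B1 (Suc j))^(r - Suc j) = A' * (A' * C')^e"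
      unfolding GB1(1,2) ej e_def[symmetric] by (simp add: power_mult_distrib)
    have "\<Phi> B2 = \<Phi> B1" unfolding \<Phi>_def by (rule prod.cong) (auto simp: GB2)
    also have "\<dots> = (\<Prod>k\<in>{..<r}-{j,Suc j}. (G B1 k)^(r-k)) * ((G B1 j)^(r-j) * (G B1 (Suc j))^(r - Suc j))"
      unfolding \<Phi>_def by (rule prod_split2[OF that])
    also have "\<dots> = (\<Prod>k\<in>{..<r}-{j,Suc j}. (G B k)^(r-k)) * (A' * (A' * C')^e)"
      by (simp only: r1 r2)
    also have "\<dots> < (\<Prod>k\<in>{..<r}-{j,Suc j}. (G B k)^(r-k)) * (A * (A * C)^e)"
      using rpos A'lt Ap Cp AC by (intro mult_strict_left_mono) (auto intro!: mult_strict_right_mono)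
    also have "\<dots> = (\<Prod>k\<in>{..<r}-{j,Suc j}. (G B k)^(r-k)) * ((G B j)^(r-j) * (G B (Suc j))^(r - Suc j))"
      by (simp add: A_def C_def ej e_def power_mult_distrib mult_ac)
    also have "\<dots> = \<Phi> B" unfolding \<Phi>_def by (rule prod_split2[OF that, symmetric])
    finally have "\<Phi> B2 < \<Phi> B" .
    then show False using Bmin[OF \<open>B2 \<in> F\<close>] by simp
  qed
  have step2: "G B j \<le> 2 * G B (Suc j)" if "Suc j < r" for j
  proof -
    have "(mu (rv B) (Suc j) j)^2 * G B j \<le> 1/4 * G B j"
      using musq[OF that, of j] G_nonneg[of B j] by (intro mult_right_mono) auto
    then show ?thesis using lov[OF that] by linarith
  qed
  have geo: "G B l \<le> 2^(k-l) * G B k" if "l \<le> k" "k < r" for l k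
    using that
  proof (induction k)
    case 0 then show ?case by simp
  next
    case (Suc k)
    show ?case
    proof (cases "l = Suc k")
      case True then show ?thesis by simp
    next
      case False
      then have "l \<le> k" using Suc.prems by simp
      then have "G B l \<le> 2^(k-l) * G B k" using Suc by simp
      also have "\<dots> \<le> 2^(k-l) * (2 * G B (Suc k))" using step2[OF Suc.prems(2)] by simp
      also have "\<dots> = 2^(Suc k - l) * G B (Suc k)" using \<open>l \<le> k\<close> by (simp add: Suc_diff_le)
      finally show ?thesis .
    qed
  qed
  have bnd: "ip (rv B k) (rv B k) \<le> 2^(2*k+1) * G B k" if "k < r" for k
  proof -
    have Gk: "G B k > 0" using Bprops(2) that by auto
    have "ip (rv B k) (rv B k) = G B k + (\<Sum>l<k. (mu (rv B) k l)^2 * G B l)"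
      unfolding G_def by (rule norm_decomp)
    also have "\<dots> \<le> G B k + (\<Sum>l<k. 2^k * G B k)"
    proof (intro add_left_mono sum_mono)
      fix l assume "l \<in> {..<k}"
      then have lk: "l < k" by simp
      have "(mu (rv B) k l)^2 * G B l \<le> 1 * G B l"
        using musq[OF that lk] G_nonneg by (intro mult_right_mono) auto
      also have "\<dots> \<le> 2^(k-l) * G B k" using geo[of l k] lk that by simp
      also have "\<dots> \<le> 2^k * G B k" using Gk by (intro mult_right_mono) (auto intro: power_increasing)
      finally show "(mu (rv B) k l)^2 * G B l \<le> 2^k * G B k" .
    qed
    also have "\<dots> = (1 + real k * 2^k) * G B k" by (simp add: algebra_simps)
    also have "\<dots> \<le> 2^(2*k+1) * G B k"
    proof (intro mult_right_mono)
      have "real k \<le> real (2^k)" using less_exp[of k] by simp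
      then have "real k \<le> 2^k" by simp
      then have "real k * 2^k \<le> 2^k * 2^k" by (intro mult_right_mono) auto
      also have "\<dots> = 2^(2*k)" by (simp add: power_add[symmetric] mult_2)
      finally have "real k * 2^k \<le> 2^(2*k)" .
      moreover have "(1::real) \<le> 2^(2*k)" by simp
      moreover have "(2::real)^(2*k+1) = 2 * 2^(2*k)" by simp
      ultimately show "1 + real k * 2^k \<le> (2::real)^(2*k+1)" by linarith
    qed (use Gk in auto)
    finally show ?thesis .
  qed
  show ?thesis using Bprops bnd unfolding P0_def by blast
qed

end


lemma bezout_set:
  fixes b :: "nat \<Rightarrow> int"
  assumes "finite P" shows "\<exists>a. (\<Sum>i\<in>P. a i * b i) = Gcd (b ` P)"
  using assms
proof (induction P rule: finite_induct)
  case empty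
  then show ?case by simp
next
  case (insert x P)
  then obtain a where a: "(\<Sum>i\<in>P. a i * b i) = Gcd (b ` P)" by blast
  obtain u v where uv: "u * b x + v * Gcd (b ` P) = gcd (b x) (Gcd (b ` P))" using bezout_int by blast
  define a' where "a' = (\<lambda>i. if i = x then u else v * a i)"
  have "(\<Sum>i\<in>insert x P. a' i * b i) = u * b x + (\<Sum>i\<in>P. v * (a i * b i))"
    using insert.hyps by (simp add: a'_def mult.assoc cong: sum.cong) (rule sum.cong, auto)
  also have "\<dots> = u * b x + v * Gcd (b ` P)" by (simp add: sum_distrib_left[symmetric] a)
  finally show ?case using uv by auto
qed

lemma cs_sum:
  fixes f :: "nat \<Rightarrow> real"
  assumes "finite I" shows "(\<Sum>i\<in>I. f i)^2 \<le> real (card I) * (\<Sum>i\<in>I. (f i)^2)"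
proof -
  have "0 \<le> (\<Sum>i\<in>I. \<Sum>j\<in>I. (f i - f j)^2)" by (intro sum_nonneg) auto
  also have "(\<Sum>i\<in>I. \<Sum>j\<in>I. (f i - f j)^2) = (\<Sum>i\<in>I. \<Sum>j\<in>I. (f i)^2 + (f j)^2 - 2 * (f i * f j))"
    by (intro sum.cong refl) (simp add: power2_eq_square algebra_simps)
  also have "\<dots> = (\<Sum>i\<in>I. \<Sum>j\<in>I. (f i)^2) + (\<Sum>i\<in>I. \<Sum>j\<in>I. (f j)^2) - 2 * (\<Sum>i\<in>I. \<Sum>j\<in>I. f i * f j)"
    by (simp add: sum.distrib sum_subtractf sum_distrib_left)
  also have "(\<Sum>i\<in>I. \<Sum>j\<in>I. (f i)^2) = real (card I) * (\<Sum>i\<in>I. (f i)^2)"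
    by (simp add: sum_distrib_left mult.commute)
  also have "(\<Sum>i\<in>I. \<Sum>j\<in>I. (f j)^2) = real (card I) * (\<Sum>i\<in>I. (f i)^2)" by simp
  also have "(\<Sum>i\<in>I. \<Sum>j\<in>I. f i * f j) = (\<Sum>i\<in>I. f i)^2"
    by (simp add: sum_product power2_eq_square)
  finally show ?thesis by simp
qed

lemma prod_pow_odd: "(\<Prod>j<r. (2::real)^(2*j+1)) = 2^(r*r)"
proof (induction r)
  case 0 then show ?case by simp
next
  case (Suc r)
  have "(\<Prod>j<Suc r. (2::real)^(2*j+1)) = 2^(r*r) * 2^(2*r+1)" using Suc by simp
  also have "\<dots> = 2^(r*r + (2*r+1))" by (simp add: power_add)
  also have "r*r + (2*r+1) = Suc r * Suc r" by simp
  finally show ?case .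
qed

locale conc =
  fixes d :: nat and N :: "nat \<Rightarrow> int" and b :: "nat \<Rightarrow> int"
  assumes d2: "d \<ge> 2" and Npos: "\<forall>i<d. N i > 0" and bnz: "\<exists>i<d. b i \<noteq> 0"
    and gcd1: "Gcd (b ` {..<d}) = 1" and bN: "\<forall>i<d. \<bar>b i\<bar> \<le> N i"
begin

definition ratio :: "nat \<Rightarrow> real" where "ratio i = real_of_int \<bar>b i\<bar> / real_of_int (N i)"
definition Tm :: real where "Tm = Max (ratio ` {..<d})"
definition m :: nat where "m = (SOME m. m < d \<and> ratio m = Tm)"

lemma m_ex: "\<exists>m. m < d \<and> ratio m = Tm"
proof -
  have "{..<d} \<noteq> {}" using d2 by (auto simp: lessThan_empty_iff)
  then have "Tm \<in> ratio ` {..<d}" unfolding Tm_def by (intro Max_in) auto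
  then show ?thesis by auto
qed

lemma m_lt: "m < d" and m_ratio: "ratio m = Tm"
  using someI_ex[OF m_ex] unfolding m_def by auto

lemma ratio_le: "i < d \<Longrightarrow> ratio i \<le> ratio m"
  unfolding m_ratio Tm_def by (intro Max_ge) auto

lemma bm_nz: "b m \<noteq> 0"
proof
  assume "b m = 0"
  obtain i where i: "i < d" "b i \<noteq> 0" using bnz by auto
  have "ratio i > 0" using i Npos by (simp add: ratio_def)
  moreover have "ratio m = 0" using \<open>b m = 0\<close> by (simp add: ratio_def)
  ultimately show False using ratio_le[OF i(1)] by simp
qed

lemma bNm: "i < d \<Longrightarrow> real_of_int \<bar>b i\<bar> * real_of_int (N m) \<le> real_of_int \<bar>b m\<bar> * real_of_int (N i)"
  using ratio_le[of i] Npos m_lt by (simp add: ratio_def divide_le_eq le_divide_eq mult.commute)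

definition r :: nat where "r = d - 1"
definition idx :: "nat \<Rightarrow> nat" where "idx k = (if k < m then k else Suc k)"

lemma idx_ne: "idx k \<noteq> m" by (simp add: idx_def)
lemma idx_lt: "k < r \<Longrightarrow> idx k < d" using m_lt by (auto simp: idx_def r_def)
lemma idx_inj: "inj idx" unfolding inj_def idx_def by auto
lemma idx_mono: "k < k' \<Longrightarrow> idx k < idx k'" by (simp add: idx_def)
lemma idx_image: "idx ` {..<r} = {..<d} - {m}"
proof
  show "idx ` {..<r} \<subseteq> {..<d} - {m}" using idx_lt idx_ne by auto
  show "{..<d} - {m} \<subseteq> idx ` {..<r}"
  proof
    fix i assume i: "i \<in> {..<d} - {m}"
    show "i \<in> idx ` {..<r}"
    proof (cases "i < m")
      case True then show ?thesis using m_lt by (intro image_eqI[of _ _ i]) (auto simp: idx_def r_def)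
    next
      case False then have "i > m" using i by auto
      then show ?thesis using i by (intro image_eqI[of _ _ "i - 1"]) (auto simp: idx_def r_def)
    qed
  qed
qed

definition P :: "nat \<Rightarrow> nat set" where "P k = insert m (idx ` {..<k})"

lemma P_Suc: "P (Suc k) = insert (idx k) (P k)" by (auto simp: P_def lessThan_Suc)
lemma P_fin: "finite (P k)" by (simp add: P_def)
lemma P_sub: "k \<le> r \<Longrightarrow> P k \<subseteq> {..<d}" using m_lt idx_lt by (auto simp: P_def)
lemma P_r: "P r = {..<d}" using idx_image m_lt by (auto simp: P_def)
lemma idx_notin: "l \<le> k \<Longrightarrow> idx k \<notin> P l"
proof
  assume l: "l \<le> k" and "idx k \<in> P l"
  then obtain j where "j < l" "idx k = idx j" using idx_ne by (auto simp: P_def)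
  then show False using idx_mono[of j k] l by simp
qed

definition Gg :: "nat \<Rightarrow> int" where "Gg k = Gcd (b ` P k)"

lemma Gg_0: "Gg 0 = \<bar>b m\<bar>" by (simp add: Gg_def P_def)
lemma Gg_Suc: "Gg (Suc k) = gcd (b (idx k)) (Gg k)" by (simp add: Gg_def P_Suc)
lemma Gg_r: "Gg r = 1" using gcd1 by (simp add: Gg_def P_r)
lemma Gg_pos: "Gg k > 0"
proof (induction k)
  case 0 then show ?case using bm_nz by (simp add: Gg_0)
next
  case (Suc k) then show ?case by (simp add: Gg_Suc)
qed

definition cc :: "nat \<Rightarrow> int" where "cc k = Gg k div Gg (Suc k)"
definition qq :: "nat \<Rightarrow> int" where "qq k = b (idx k) div Gg (Suc k)"

lemma Gg_cc: "Gg k = cc k * Gg (Suc k)"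
  unfolding cc_def by (simp add: Gg_Suc)
lemma b_qq: "b (idx k) = qq k * Gg (Suc k)"
  unfolding qq_def by (simp add: Gg_Suc)
lemma cc_pos: "cc k > 0"
  using Gg_cc[of k] Gg_pos[of k] Gg_pos[of "Suc k"] by (simp add: zero_less_mult_iff)

lemma prod_cc: "(\<Prod>k<K. cc k) * Gg K = \<bar>b m\<bar>"
proof (induction K)
  case 0 then show ?case by (simp add: Gg_0)
next
  case (Suc K) then show ?case by (simp add: Gg_cc[of K] mult_ac)
qed

lemma prod_cc_r: "(\<Prod>k<r. cc k) = \<bar>b m\<bar>" using prod_cc[of r] by (simp add: Gg_r)

definition wv :: "nat \<Rightarrow> nat \<Rightarrow> int" where "wv k = (SOME a. (\<Sum>i\<in>P k. a i * b i) = Gg k)"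
lemma wv: "(\<Sum>i\<in>P k. wv k i * b i) = Gg k"
  unfolding wv_def Gg_def using someI_ex[OF bezout_set[OF P_fin]] .

definition u :: "nat \<Rightarrow> nat \<Rightarrow> int" where
  "u k i = (if i = idx k then cc k else if i \<in> P k then - qq k * wv k i else 0)"

lemma u_zero: "i \<notin> P (Suc k) \<Longrightarrow> u k i = 0" by (simp add: u_def P_Suc)

lemma u_dotP: "(\<Sum>i\<in>P (Suc k). u k i * b i) = 0"
proof -
  have "(\<Sum>i\<in>P (Suc k). u k i * b i) = u k (idx k) * b (idx k) + (\<Sum>i\<in>P k. u k i * b i)"
    unfolding P_Suc using idx_notin[of k k] P_fin by simp
  also have "(\<Sum>i\<in>P k. u k i * b i) = (\<Sum>i\<in>P k. - qq k * (wv k i * b i))"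
    using idx_notin[of k k] by (intro sum.cong) (auto simp: u_def)
  also have "\<dots> = - qq k * Gg k" by (simp add: sum_negf sum_distrib_left[symmetric] wv)
  finally show ?thesis by (simp add: u_def b_qq[of k] Gg_cc[of k])
qed

lemma sum_d_P: assumes "k < r" "\<And>i. i \<notin> P (Suc k) \<Longrightarrow> f i = 0"
  shows "(\<Sum>i<d. f i) = (\<Sum>i\<in>P (Suc k). f i)"
  by (rule sum.mono_neutral_right) (use assms P_sub[of "Suc k"] in \<open>auto simp: r_def\<close>)

lemma u_dot: "k < r \<Longrightarrow> (\<Sum>i<d. u k i * b i) = 0"
  using sum_d_P[of k "\<lambda>i. u k i * b i"] u_zero u_dotP by simp


definition dotd :: "(nat \<Rightarrow> int) \<Rightarrow> (nat \<Rightarrow> int) \<Rightarrow> int" where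
  "dotd x y = (\<Sum>i<d. x i * y i)"

definition Good :: "(nat \<Rightarrow> nat \<Rightarrow> int) \<Rightarrow> bool" where
  "Good B = ((\<forall>k<r. dotd (B k) b = 0) \<and> (\<forall>z. (\<forall>k<r. dotd (B k) z = 0) \<longrightarrow> (\<exists>t. \<forall>i<d. z i = t * b i)))"

lemma dot_tri:
  assumes "\<And>t. t < d \<Longrightarrow> B' k t = B k t + (\<Sum>l<k. c k l * B l t)"
  shows "dotd (B' k) z = dotd (B k) z + (\<Sum>l<k. c k l * dotd (B l) z)"
proof -
  have "dotd (B' k) z = (\<Sum>i<d. B k i * z i + (\<Sum>l<k. c k l * (B l i * z i)))"
    unfolding dotd_def by (rule sum.cong) (simp_all add: assms sum_distrib_right sum_distrib_left distrib_left distrib_right mult_ac)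
  also have "\<dots> = dotd (B k) z + (\<Sum>l<k. c k l * dotd (B l) z)"
    unfolding dotd_def by (simp add: sum.distrib sum_distrib_left sum.swap[of _ "{..<d}"])
  finally show ?thesis .
qed

lemma good_tri: assumes "Good B" "\<And>k t. k < r \<Longrightarrow> t < d \<Longrightarrow> B' k t = B k t + (\<Sum>l<k. c k l * B l t)"
  shows "Good B'"
proof -
  have dt: "dotd (B' k) z = dotd (B k) z + (\<Sum>l<k. c k l * dotd (B l) z)" if "k < r" for k z
    using assms(2) that by (intro dot_tri) auto
  have 1: "\<forall>k<r. dotd (B' k) b = 0" using assms(1) unfolding Good_def by (auto simp: dt)
  have 2: "\<exists>t. \<forall>i<d. z i = t * b i" if z: "\<forall>k<r. dotd (B' k) z = 0" for z
  proof -
    have "dotd (B k) z = 0" if "k < r" for k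
      using that
    proof (induction k rule: less_induct)
      case (less k)
      then show ?case using dt[OF less.prems, of z] z by simp
    qed
    then show ?thesis using assms(1) unfolding Good_def by blast
  qed
  show ?thesis unfolding Good_def using 1 2 by blast
qed

lemma good_swp: assumes "Good B" "Suc j < r" shows "Good (swp B j)"
proof -
  have idx: "\<exists>k'<r. swp B j k = B k'" if "k < r" for k
  proof (cases "k = j")
    case True then show ?thesis using assms(2) by (intro exI[of _ "Suc j"]) (simp add: swp_def)
  next
    case False
    show ?thesis
    proof (cases "k = Suc j")
      case True then show ?thesis using assms(2) by (intro exI[of _ j]) (simp add: swp_def)
    next
      case False then show ?thesis using that \<open>k \<noteq> j\<close> by (intro exI[of _ k]) (simp add: swp_def)
    qed
  qed
  have idx2: "\<exists>k'<r. B k = swp B j k'" if "k < r" for k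
  proof (cases "k = j \<or> k = Suc j")
    case True then show ?thesis
    proof
      assume "k = j" then show ?thesis using assms(2) by (intro exI[of _ "Suc j"]) (simp add: swp_def)
    next
      assume "k = Suc j" then show ?thesis using assms(2) by (intro exI[of _ j]) (simp add: swp_def)
    qed
  next
    case False then show ?thesis using that by (intro exI[of _ k]) (auto simp: swp_def)
  qed
  have 1: "\<forall>k<r. dotd (swp B j k) b = 0" using assms(1) idx unfolding Good_def by metis
  have 2: "\<exists>t. \<forall>i<d. z i = t * b i" if z: "\<forall>k<r. dotd (swp B j k) z = 0" for z
  proof -
    have "\<forall>k<r. dotd (B k) z = 0" using z idx2 by metis
    then show ?thesis using assms(1) unfolding Good_def by blast
  qed
  show ?thesis unfolding Good_def using 1 2 by blast
qed

lemma w_ge1: "t < d \<Longrightarrow> 1 \<le> (real_of_int (N t))^2"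
proof -
  assume "t < d"
  then have "1 \<le> real_of_int (N t)" using Npos by (simp add: int_one_le_iff_zero_less)
  then show ?thesis by (simp add: one_le_power)
qed

interpretation L: lll d "\<lambda>i. (real_of_int (N i))^2" r Good
  by unfold_locales (auto intro: w_ge1 good_tri good_swp)


lemma u_dot_split: "k < r \<Longrightarrow> dotd (u k) z = cc k * z (idx k) - qq k * (\<Sum>i\<in>P k. wv k i * z i)"
proof -
  assume k: "k < r"
  have "dotd (u k) z = (\<Sum>i\<in>P (Suc k). u k i * z i)"
    unfolding dotd_def using k u_zero by (intro sum_d_P) auto
  also have "\<dots> = u k (idx k) * z (idx k) + (\<Sum>i\<in>P k. u k i * z i)"
    unfolding P_Suc using idx_notin[of k k] P_fin by simp
  also have "(\<Sum>i\<in>P k. u k i * z i) = (\<Sum>i\<in>P k. - qq k * (wv k i * z i))"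
    using idx_notin[of k k] by (intro sum.cong) (auto simp: u_def)
  also have "\<dots> = - qq k * (\<Sum>i\<in>P k. wv k i * z i)" by (simp add: sum_distrib_left)
  finally show ?thesis by (simp add: u_def[of k "idx k"])
qed

lemma u_ker: assumes z: "\<forall>k<r. dotd (u k) z = 0" shows "k \<le> r \<Longrightarrow> \<forall>i\<in>P k. z i * b m = z m * b i"
proof (induction k)
  case 0 then show ?case by (simp add: P_def)
next
  case (Suc k)
  then have k: "k < r" by simp
  have IH: "\<forall>i\<in>P k. z i * b m = z m * b i" using Suc by simp
  have e: "cc k * z (idx k) = qq k * (\<Sum>i\<in>P k. wv k i * z i)" using z k u_dot_split[OF k, of z] by simp
  have inner: "(\<Sum>i\<in>P k. wv k i * (z i * b m)) = (\<Sum>i\<in>P k. z m * (wv k i * b i))"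
  proof (rule sum.cong)
    fix i assume "i \<in> P k"
    then have eq: "z i * b m = z m * b i" using IH by blast
    have "wv k i * (z i * b m) = wv k i * (z m * b i)" by (simp only: eq)
    also have "\<dots> = z m * (wv k i * b i)" by (simp add: mult_ac)
    finally show "wv k i * (z i * b m) = z m * (wv k i * b i)" .
  qed simp
  have "cc k * (z (idx k) * b m) = (cc k * z (idx k)) * b m" by (simp add: mult_ac)
  also have "\<dots> = qq k * (\<Sum>i\<in>P k. wv k i * z i) * b m" by (simp only: e)
  also have "\<dots> = qq k * (\<Sum>i\<in>P k. wv k i * (z i * b m))" by (simp add: sum_distrib_left sum_distrib_right mult_ac)
  also have "\<dots> = qq k * (\<Sum>i\<in>P k. z m * (wv k i * b i))" by (simp only: inner)
  also have "\<dots> = qq k * z m * Gg k" by (simp add: sum_distrib_left[symmetric] wv)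
  also have "\<dots> = cc k * (z m * b (idx k))" by (simp add: Gg_cc[of k] b_qq[of k] mult_ac)
  finally have "z (idx k) * b m = z m * b (idx k)" using cc_pos[of k] by simp
  then show ?case using IH by (simp add: P_Suc)
qed

lemma good_u: "Good u"
  unfolding Good_def
proof (intro conjI allI impI)
  fix k assume "k < r" then show "dotd (u k) b = 0" using u_dot by (simp add: dotd_def)
next
  fix z assume z: "\<forall>k<r. dotd (u k) z = 0"
  have zi: "z i * b m = z m * b i" if "i < d" for i using u_ker[OF z, of r] that by (simp add: P_r)
  obtain a where a: "(\<Sum>i<d. a i * b i) = 1" using bezout_set[of "{..<d}" b] gcd1 by auto
  define t where "t = (\<Sum>i<d. a i * z i)"
  have "z i = t * b i" if "i < d" for i
  proof -
    have "b m * (t * b i) = (\<Sum>l<d. a l * (z l * b m) * b i)"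
      by (simp add: t_def sum_distrib_left sum_distrib_right mult_ac)
    also have "\<dots> = (\<Sum>l<d. z m * b i * (a l * b l))" by (rule sum.cong) (auto simp: zi mult_ac)
    also have "\<dots> = z m * b i" by (simp add: sum_distrib_left[symmetric] a)
    also have "\<dots> = b m * z i" using zi[OF that] by (simp add: mult_ac)
    finally show ?thesis using bm_nz by simp
  qed
  then show "\<exists>t. \<forall>i<d. z i = t * b i" by blast
qed

lemma spn_coord0: "x \<in> L.spn f k \<Longrightarrow> (\<And>l. l < k \<Longrightarrow> f l t = 0) \<Longrightarrow> t < d \<Longrightarrow> x t = 0"
  by (auto simp: L.spn_def)

lemma G_u_pos: assumes "k < r" shows "L.G u k > 0"
proof -
  have "(\<lambda>t. L.rv u k t - L.gso (L.rv u) k t) \<in> L.spn (L.rv u) k" by (rule L.f_minus_gso')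
  moreover have "L.rv u l (idx k) = 0" if "l < k" for l
    using u_zero[of "idx k" l] idx_notin[of "Suc l" k] that by (simp add: L.rv_def)
  ultimately have "L.rv u k (idx k) - L.gso (L.rv u) k (idx k) = 0"
    using idx_lt[OF assms] by (rule spn_coord0)
  then have g: "L.gso (L.rv u) k (idx k) = real_of_int (cc k)" by (simp add: L.rv_def u_def)
  have "(real_of_int (N (idx k)))^2 * (L.gso (L.rv u) k (idx k))^2 \<le> L.G u k"
    unfolding L.G_def by (rule L.ip_coord_le[OF idx_lt[OF assms]])
  moreover have "(real_of_int (N (idx k)))^2 * (real_of_int (cc k))^2 > 0"
  proof -
    have "N (idx k) > 0" using Npos idx_lt[OF assms] by auto
    then show ?thesis using cc_pos[of k] by (intro mult_pos_pos zero_less_power) simp_all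
  qed
  ultimately show ?thesis using g by simp
qed


lemma u_sumPk: "(\<Sum>i\<in>P k. real_of_int (u k i) * real_of_int (b i)) = - real_of_int (cc k) * real_of_int (b (idx k))"
proof -
  have "(\<Sum>i\<in>P (Suc k). u k i * b i) = u k (idx k) * b (idx k) + (\<Sum>i\<in>P k. u k i * b i)"
    unfolding P_Suc using idx_notin[of k k] P_fin by simp
  then have "(\<Sum>i\<in>P k. u k i * b i) = - cc k * b (idx k)" using u_dotP[of k] by (simp add: u_def)
  then have "real_of_int (\<Sum>i\<in>P k. u k i * b i) = real_of_int (- cc k * b (idx k))" by simp
  then show ?thesis by simp
qed

lemma span_supp: "k \<le> r \<Longrightarrow> (\<And>i. i \<notin> P k \<Longrightarrow> y i = 0) \<Longrightarrow> (\<Sum>i\<in>P k. y i * real_of_int (b i)) = 0 \<Longrightarrow> y \<in> L.spn (L.rv u) k"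
proof (induction k arbitrary: y)
  case 0
  have "y m * real_of_int (b m) = 0" using "0.prems"(3) by (simp add: P_def)
  then have "y m = 0" using bm_nz by simp
  have "y i = 0" for i
  proof (cases "i = m")
    case False then show ?thesis using "0.prems"(2)[of i] by (simp add: P_def)
  qed (use \<open>y m = 0\<close> in simp)
  then have "\<And>i. y i = 0" .
  then show ?case using L.spn_zero by (rule_tac L.spn_cong) auto
next
  case (Suc k)
  have k: "k < r" using Suc.prems by simp
  let ?c = "y (idx k) / real_of_int (cc k)"
  define y' where "y' = (\<lambda>i. y i - ?c * L.rv u k i)"
  have ccnz: "real_of_int (cc k) \<noteq> 0" using cc_pos[of k] by simp
  have supp: "y' i = 0" if "i \<notin> P k" for i
  proof (cases "i = idx k")
    case True then show ?thesis using ccnz by (simp add: y'_def L.rv_def u_def)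
  next
    case False then have "i \<notin> P (Suc k)" using that by (simp add: P_Suc)
    then show ?thesis using Suc.prems(2) u_zero by (simp add: y'_def L.rv_def)
  qed
  have s1: "y (idx k) * real_of_int (b (idx k)) + (\<Sum>i\<in>P k. y i * real_of_int (b i)) = 0"
    using Suc.prems(3) idx_notin[of k k] P_fin by (simp add: P_Suc)
  have "(\<Sum>i\<in>P k. y' i * real_of_int (b i)) = (\<Sum>i\<in>P k. y i * real_of_int (b i)) - ?c * (\<Sum>i\<in>P k. real_of_int (u k i) * real_of_int (b i))"
    by (simp add: y'_def L.rv_def algebra_simps sum_subtractf sum_distrib_left)
  also have "\<dots> = 0" using s1 ccnz by (simp add: u_sumPk)
  finally have "y' \<in> L.spn (L.rv u) k" using Suc.IH[of y'] k supp by simp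
  then have "y' \<in> L.spn (L.rv u) (Suc k)" by (rule L.spn_mono[rotated]) simp
  moreover have "(\<lambda>t. ?c * L.rv u k t) \<in> L.spn (L.rv u) (Suc k)" by (intro L.spn_scale L.spn_gen) simp
  ultimately have "(\<lambda>t. y' t + ?c * L.rv u k t) \<in> L.spn (L.rv u) (Suc k)" by (rule L.spn_add)
  then show ?case by (rule L.spn_cong) (simp add: y'_def)
qed

lemma G_u_le: assumes k: "k < r"
  shows "L.G u k \<le> 2 * (real_of_int (cc k))^2 * (real_of_int (N (idx k)))^2"
proof -
  let ?p = "idx k"
  let ?zm = "- real_of_int (cc k) * real_of_int (b ?p) / real_of_int (b m)"
  define z where "z = (\<lambda>i. if i = ?p then real_of_int (cc k) else if i = m then ?zm else 0)"
  define y where "y = (\<lambda>i. L.rv u k i - z i)"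
  have mP: "m \<in> P k" by (simp add: P_def)
  have pm: "?p \<noteq> m" by (rule idx_ne)
  have ysupp: "y i = 0" if "i \<notin> P k" for i
  proof (cases "i = ?p")
    case True then show ?thesis by (simp add: y_def z_def L.rv_def u_def)
  next
    case False
    then have "i \<notin> P (Suc k)" "i \<noteq> m" using that mP by (auto simp: P_Suc)
    then show ?thesis using u_zero False by (simp add: y_def z_def L.rv_def)
  qed
  have zsum: "(\<Sum>i\<in>P k. z i * real_of_int (b i)) = ?zm * real_of_int (b m)"
  proof -
    have "(\<Sum>i\<in>P k. z i * real_of_int (b i)) = (\<Sum>i\<in>P k. if i = m then ?zm * real_of_int (b m) else 0)"
      using idx_notin[of k k] by (intro sum.cong) (auto simp: z_def)
    also have "\<dots> = ?zm * real_of_int (b m)" using mP P_fin by simp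
    finally show ?thesis .
  qed
  have "(\<Sum>i\<in>P k. y i * real_of_int (b i)) = (\<Sum>i\<in>P k. real_of_int (u k i) * real_of_int (b i)) - (\<Sum>i\<in>P k. z i * real_of_int (b i))"
    by (simp add: y_def L.rv_def algebra_simps sum_subtractf)
  also have "\<dots> = 0" using bm_nz by (simp add: u_sumPk zsum)
  finally have "y \<in> L.spn (L.rv u) k" using span_supp[of k y] k ysupp by simp
  then have "L.G u k \<le> L.ip (\<lambda>t. L.rv u k t - y t) (\<lambda>t. L.rv u k t - y t)"
    unfolding L.G_def by (rule L.gso_min)
  also have "(\<lambda>t. L.rv u k t - y t) = z" by (rule ext) (simp add: y_def)
  also have "L.ip z z = (\<Sum>t\<in>{?p, m}. (real_of_int (N t))^2 * z t * z t)"
    unfolding L.ip_def using idx_lt[OF k] m_lt by (intro sum.mono_neutral_right) (auto simp: z_def)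
  also have "\<dots> = (real_of_int (N ?p))^2 * (real_of_int (cc k))^2 + (real_of_int (N m))^2 * ?zm^2"
    using pm by (simp add: z_def power2_eq_square)
  also have "\<dots> \<le> 2 * (real_of_int (cc k))^2 * (real_of_int (N ?p))^2"
  proof -
    have "\<bar>real_of_int (N m) * ?zm\<bar> = real_of_int \<bar>cc k\<bar> * (real_of_int \<bar>b ?p\<bar> * real_of_int (N m) / real_of_int \<bar>b m\<bar>)"
    proof -
      have "N m > 0" using Npos m_lt by simp
      then show ?thesis by (simp add: abs_mult abs_divide)
    qed
    also have "\<dots> \<le> real_of_int \<bar>cc k\<bar> * real_of_int (N ?p)"
    proof (intro mult_left_mono)
      have "real_of_int \<bar>b ?p\<bar> * real_of_int (N m) \<le> real_of_int \<bar>b m\<bar> * real_of_int (N ?p)" by (rule bNm[OF idx_lt[OF k]])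
      then show "real_of_int \<bar>b ?p\<bar> * real_of_int (N m) / real_of_int \<bar>b m\<bar> \<le> real_of_int (N ?p)"
        using bm_nz by (simp add: divide_le_eq mult.commute)
    qed simp
    finally have "\<bar>real_of_int (N m) * ?zm\<bar> \<le> real_of_int \<bar>cc k\<bar> * real_of_int (N ?p)" .
    then have "\<bar>real_of_int (N m) * ?zm\<bar>^2 \<le> (real_of_int \<bar>cc k\<bar> * real_of_int (N ?p))^2"
      by (intro power_mono) auto
    moreover have "\<bar>real_of_int (N m) * ?zm\<bar>^2 = (real_of_int (N m))^2 * ?zm^2"
      by (simp only: power2_abs power_mult_distrib)
    moreover have "(real_of_int \<bar>cc k\<bar> * real_of_int (N ?p))^2 = (real_of_int (cc k))^2 * (real_of_int (N ?p))^2"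
      by (simp add: power_mult_distrib)
    ultimately have "(real_of_int (N m))^2 * ?zm^2 \<le> (real_of_int (cc k))^2 * (real_of_int (N ?p))^2"
      by simp
    then show ?thesis by simp
  qed
  finally show ?thesis .
qed


definition X :: real where "X = (\<Prod>i<d. real_of_int (N i)) * Tm"

lemma prod_minus_m: "(\<Prod>i<d. real_of_int (N i)) = real_of_int (N m) * (\<Prod>i\<in>{..<d}-{m}. real_of_int (N i))"
  using m_lt by (intro prod.remove) auto

lemma X_eq: "X = real_of_int \<bar>b m\<bar> * (\<Prod>i\<in>{..<d}-{m}. real_of_int (N i))"
proof -
  have "N m > 0" using Npos m_lt by simp
  then show ?thesis unfolding X_def prod_minus_m m_ratio[symmetric] ratio_def by simp
qed

lemma X_pos: "X > 0"
  unfolding X_eq using bm_nz Npos by (intro mult_pos_pos prod_pos) auto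

lemma prod_idx: "(\<Prod>k<r. real_of_int (N (idx k))) = (\<Prod>i\<in>{..<d}-{m}. real_of_int (N i))"
proof -
  have "(\<Prod>i\<in>idx ` {..<r}. real_of_int (N i)) = (\<Prod>k<r. real_of_int (N (idx k)))"
    using prod.reindex[OF inj_on_subset[OF idx_inj subset_UNIV], of "\<lambda>i. real_of_int (N i)" "{..<r}"]
    by (simp add: comp_def)
  then show ?thesis using idx_image by simp
qed

lemma prod_Gu: "(\<Prod>k<r. L.G u k) \<le> 2^r * X^2"
proof -
  have "(\<Prod>k<r. L.G u k) \<le> (\<Prod>k<r. 2 * (real_of_int (cc k))^2 * (real_of_int (N (idx k)))^2)"
    by (intro prod_mono conjI L.G_nonneg G_u_le) auto
  also have "\<dots> = 2^r * (\<Prod>k<r. real_of_int (cc k))^2 * (\<Prod>k<r. real_of_int (N (idx k)))^2"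
    by (simp add: prod.distrib prod_power_distrib)
  also have "(\<Prod>k<r. real_of_int (cc k)) = real_of_int \<bar>b m\<bar>"
    using prod_cc_r by (metis of_int_prod)
  also have "2^r * (real_of_int \<bar>b m\<bar>)^2 * (\<Prod>k<r. real_of_int (N (idx k)))^2 = 2^r * X^2"
    by (simp add: X_eq prod_idx power_mult_distrib)
  finally show ?thesis .
qed


lemma ipG: "L.G B j \<le> L.ip (L.rv B j) (L.rv B j)"
proof -
  have "L.ip (L.rv B j) (L.rv B j) = L.G B j + (\<Sum>l<j. (L.mu (L.rv B) j l)^2 * L.G B l)"
    unfolding L.G_def by (rule L.norm_decomp)
  moreover have "(\<Sum>l<j. (L.mu (L.rv B) j l)^2 * L.G B l) \<ge> 0"
    by (intro sum_nonneg mult_nonneg_nonneg L.G_nonneg) auto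
  ultimately show ?thesis by simp
qed

lemma row_nz: assumes "L.G B j > 0" shows "\<exists>i<d. B j i \<noteq> 0"
proof (rule ccontr)
  assume "\<not> ?thesis"
  then have "L.ip (L.rv B j) (L.rv B j) = 0" by (simp add: L.ip_def L.rv_def)
  then show False using ipG[of B j] assms by simp
qed

lemma A_props:
  fixes B :: "nat \<Rightarrow> nat \<Rightarrow> int"
  assumes "\<exists>i<d. B j i \<noteq> 0"
  shows "(\<Sum>i<d. \<bar>B j i\<bar> * N i) \<ge> Min (N ` {..<d})" and "(\<Sum>i<d. \<bar>B j i\<bar>) \<ge> 1"
proof -
  obtain i0 where i0: "i0 < d" "B j i0 \<noteq> 0" using assms by auto
  have N0: "N i0 > 0" using Npos i0 by simp
  have "\<bar>B j i0\<bar> \<ge> 1" using i0 by simp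
  then have "\<bar>B j i0\<bar> * N i0 \<ge> 1 * N i0" using N0 by (intro mult_right_mono) auto
  moreover have "\<bar>B j i0\<bar> * N i0 \<le> (\<Sum>i<d. \<bar>B j i\<bar> * N i)"
    using i0 Npos by (intro member_le_sum[of i0 "{..<d}" "\<lambda>i. \<bar>B j i\<bar> * N i"]) (auto intro: mult_nonneg_nonneg)
  moreover have "Min (N ` {..<d}) \<le> N i0" using i0 by (intro Min_le) auto
  ultimately show "(\<Sum>i<d. \<bar>B j i\<bar> * N i) \<ge> Min (N ` {..<d})" by simp
  have "\<bar>B j i0\<bar> \<le> (\<Sum>i<d. \<bar>B j i\<bar>)" using i0 by (intro member_le_sum) auto
  then show "(\<Sum>i<d. \<bar>B j i\<bar>) \<ge> 1" using \<open>\<bar>B j i0\<bar> \<ge> 1\<close> by simp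
qed

lemma contain:
  fixes B :: "nat \<Rightarrow> nat \<Rightarrow> int" and x :: "nat \<Rightarrow> int"
  assumes nz: "(\<Sum>i<d. \<bar>B j i\<bar>) \<ge> 1" and x: "\<forall>i<d. x i \<in> {1..N i}"
  shows "(\<Sum>i<d. B j i * x i) + (1 - (\<Sum>i<d. if B j i \<ge> 0 then B j i else B j i * N i)) \<in> {1..(\<Sum>i<d. \<bar>B j i\<bar> * N i)}"
proof -
  let ?t = "\<lambda>i. B j i * x i - (if B j i \<ge> 0 then B j i else B j i * N i)"
  have tb: "0 \<le> ?t i \<and> ?t i \<le> \<bar>B j i\<bar> * N i - \<bar>B j i\<bar>" if "i < d" for i
  proof (cases "B j i \<ge> 0")
    case True
    have x1: "1 \<le> x i" "x i \<le> N i" using x that by auto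
    have "B j i * 1 \<le> B j i * x i" by (rule mult_left_mono[OF x1(1) True])
    moreover have "B j i * x i \<le> B j i * N i" by (rule mult_left_mono[OF x1(2) True])
    ultimately show ?thesis using True by simp
  next
    case False
    have x1: "1 \<le> x i" "x i \<le> N i" using x that by auto
    have F: "B j i \<le> 0" using False by simp
    have "B j i * N i \<le> B j i * x i" by (rule mult_left_mono_neg[OF x1(2) F])
    moreover have "B j i * x i \<le> B j i * 1" by (rule mult_left_mono_neg[OF x1(1) F])
    ultimately show ?thesis using False by (simp add: algebra_simps)
  qed
  have e: "(\<Sum>i<d. B j i * x i) + (1 - (\<Sum>i<d. if B j i \<ge> 0 then B j i else B j i * N i)) = 1 + (\<Sum>i<d. ?t i)"
    by (simp add: sum_subtractf)
  have "0 \<le> (\<Sum>i<d. ?t i)" using tb by (intro sum_nonneg) auto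
  moreover have "(\<Sum>i<d. ?t i) \<le> (\<Sum>i<d. \<bar>B j i\<bar> * N i - \<bar>B j i\<bar>)" using tb by (intro sum_mono) auto
  moreover have "(\<Sum>i<d. \<bar>B j i\<bar> * N i - \<bar>B j i\<bar>) = (\<Sum>i<d. \<bar>B j i\<bar> * N i) - (\<Sum>i<d. \<bar>B j i\<bar>)"
    by (simp add: sum_subtractf)
  ultimately show ?thesis unfolding e using nz by simp
qed

lemma Abound:
  fixes B :: "nat \<Rightarrow> nat \<Rightarrow> int"
  shows "(real_of_int (\<Sum>i<d. \<bar>B j i\<bar> * N i))^2 \<le> real d * L.ip (L.rv B j) (L.rv B j)"
proof -
  have "(real_of_int (\<Sum>i<d. \<bar>B j i\<bar> * N i))^2 = (\<Sum>i<d. \<bar>real_of_int (B j i)\<bar> * real_of_int (N i))^2"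
    by simp
  also have "\<dots> \<le> real (card {..<d}) * (\<Sum>i<d. (\<bar>real_of_int (B j i)\<bar> * real_of_int (N i))^2)"
    by (rule cs_sum) simp
  also have "(\<Sum>i<d. (\<bar>real_of_int (B j i)\<bar> * real_of_int (N i))^2) = L.ip (L.rv B j) (L.rv B j)"
    unfolding L.ip_def L.rv_def by (rule sum.cong) (simp_all add: power2_eq_square power_mult_distrib abs_mult_self_eq mult_ac)
  finally show ?thesis by simp
qed


lemma d_r: "d = Suc r" using d2 by (simp add: r_def)

lemma exp_bound: "real d ^ r * 2^(r*r) * 2^r \<le> (2::real)^(2 * d^2)"
proof -
  have "real d \<le> real (2^d)" using less_exp[of d] by simp
  then have "real d \<le> 2^d" by simp
  then have "real d ^ r \<le> (2^d)^r" by (intro power_mono) auto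
  also have "\<dots> = 2^(d*r)" by (simp add: power_mult)
  finally have "real d ^ r * 2^(r*r) * 2^r \<le> 2^(d*r) * 2^(r*r) * 2^r" by (intro mult_right_mono) auto
  also have "\<dots> = (2::real)^(d*r + r*r + r)" by (simp add: power_add)
  also have "\<dots> \<le> 2^(2 * d^2)"
  proof (rule power_increasing)
    have "d * r + r * r + r = r * (d + r + 1)" by (simp add: algebra_simps)
    also have "d + r + 1 = 2 * d" using d_r by simp
    also have "r * (2 * d) \<le> d * (2 * d)" using d_r by (intro mult_right_mono) auto
    also have "d * (2 * d) = 2 * d^2" by (simp add: power2_eq_square)
    finally show "d * r + r * r + r \<le> 2 * d^2" .
  qed simp
  finally show ?thesis .
qed

lemma main:
  "\<exists>(M :: nat \<Rightarrow> nat \<Rightarrow> int) (v :: nat \<Rightarrow> int).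
     (\<forall>x1 x2 :: nat \<Rightarrow> int.
        (\<forall>j<d-1. affine_map d M v x1 j = affine_map d M v x2 j)
        \<longleftrightarrow> (\<exists>k::int. \<forall>i<d. x1 i - x2 i = k * b i))
   \<and> (\<exists>Ns :: nat \<Rightarrow> int.
        (\<forall>j<d-1. Ns j > 0 \<and> Ns j \<ge> Min (N ` {..<d}))
      \<and> (1/2) * (\<Prod>i<d. real_of_int (N i)) * Max ((\<lambda>i. real_of_int \<bar>b i\<bar> / real_of_int (N i)) ` {..<d})
          \<le> (\<Prod>j<d-1. real_of_int (Ns j))
      \<and> (\<Prod>j<d-1. real_of_int (Ns j))
          \<le> 2 ^ (d^2) * (\<Prod>i<d. real_of_int (N i)) * Max ((\<lambda>i. real_of_int \<bar>b i\<bar> / real_of_int (N i)) ` {..<d})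
      \<and> (\<forall>x :: nat \<Rightarrow> int. (\<forall>i<d. x i \<in> {1..N i}) \<longrightarrow>
            (\<forall>j<d-1. affine_map d M v x j \<in> {1..Ns j})))"
proof -
  have Mx: "Max ((\<lambda>i. real_of_int \<bar>b i\<bar> / real_of_int (N i)) ` {..<d}) = Tm"
    by (simp add: Tm_def ratio_def[abs_def])
  have rd: "d - 1 = r" by (simp add: r_def)
  have r0: "0 < r" using d2 by (simp add: r_def)
  obtain B where B: "Good B" "\<forall>k<r. L.G B k > 0" "(\<Prod>k<r. L.G B k) \<le> (\<Prod>k<r. L.G u k)"
      "\<forall>k<r. L.ip (L.rv B k) (L.rv B k) \<le> 2^(2*k+1) * L.G B k"
    using L.lll_exists[OF good_u] G_u_pos by blast
  define A where "A = (\<lambda>j. \<Sum>i<d. \<bar>B j i\<bar> * N i)"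
  define v where "v = (\<lambda>j. 1 - (\<Sum>i<d. if B j i \<ge> 0 then B j i else B j i * N i))"
  have nz: "\<exists>i<d. B j i \<noteq> 0" if "j < r" for j using row_nz B(2) that by blast
  have Amin: "A j \<ge> Min (N ` {..<d})" and Asum: "(\<Sum>i<d. \<bar>B j i\<bar>) \<ge> 1" if "j < r" for j
    using A_props[of B j, OF nz[OF that]] by (auto simp: A_def)
  have dne: "{..<d} \<noteq> {}" using d2 by (auto simp: lessThan_empty_iff)
  have Minpos: "Min (N ` {..<d}) > 0" using Npos dne by (subst Min_gr_iff) auto
  have Apos: "A j > 0" if "j < r" for j using Amin[OF that] Minpos by simp
  have cont: "affine_map d B v x j \<in> {1..A j}" if "j < r" "\<forall>i<d. x i \<in> {1..N i}" for x j
    using contain[of B j x, OF Asum[OF that(1)] that(2)] by (simp add: affine_map_def A_def v_def)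
  define PA where "PA = (\<Prod>j<r. real_of_int (A j))"
  have PApos: "PA > 0" unfolding PA_def using Apos by (intro prod_pos) auto
  have "PA^2 = (\<Prod>j<r. (real_of_int (A j))^2)" unfolding PA_def by (simp add: prod_power_distrib)
  also have "\<dots> \<le> (\<Prod>j<r. real d * 2^(2*j+1) * L.G B j)"
  proof (intro prod_mono conjI)
    fix j assume "j \<in> {..<r}"
    then have "(real_of_int (A j))^2 \<le> real d * L.ip (L.rv B j) (L.rv B j)" unfolding A_def by (rule_tac Abound)
    also have "\<dots> \<le> real d * (2^(2*j+1) * L.G B j)" using B(4) \<open>j \<in> {..<r}\<close> by (intro mult_left_mono) auto
    finally show "(real_of_int (A j))^2 \<le> real d * 2^(2*j+1) * L.G B j" by (simp add: mult_ac)
  qed simp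
  also have "\<dots> = real d ^ r * (\<Prod>j<r. (2::real)^(2*j+1)) * (\<Prod>j<r. L.G B j)"
    by (simp only: prod.distrib prod_constant card_lessThan)
  also have "\<dots> = real d ^ r * 2^(r*r) * (\<Prod>j<r. L.G B j)" by (simp only: prod_pow_odd)
  also have "\<dots> \<le> real d ^ r * 2^(r*r) * (2^r * X^2)"
    using B(3) prod_Gu by (intro mult_left_mono) auto
  also have "\<dots> = (real d ^ r * 2^(r*r) * 2^r) * X^2" by (simp add: mult_ac)
  also have "\<dots> \<le> 2^(2*d^2) * X^2" using exp_bound by (intro mult_right_mono) auto
  also have "(2::real)^(2*d^2) = (2^(d^2))^2" by (subst mult.commute) (rule power_mult)
  also have "(2^(d^2))^2 * X^2 = (2^(d^2) * X)^2" by (simp only: power_mult_distrib)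
  finally have sq: "PA^2 \<le> (2^(d^2) * X)^2" .
  have "0 \<le> (2::real)^(d^2) * X" using X_pos by simp
  from power2_le_imp_le[OF sq this] have PAle: "PA \<le> 2^(d^2) * X" .
  have "\<exists>Ns :: nat \<Rightarrow> int. (\<forall>j<r. Ns j \<ge> A j) \<and> X/2 \<le> (\<Prod>j<r. real_of_int (Ns j)) \<and> (\<Prod>j<r. real_of_int (Ns j)) \<le> 2^(d^2) * X"
  proof (cases "X/2 \<le> PA")
    case True then show ?thesis using PAle unfolding PA_def by (intro exI[of _ A]) auto
  next
    case False
    define K where "K = \<lceil>X / (2 * PA)\<rceil>"
    have q: "X / (2 * PA) > 0" using X_pos PApos by simp
    have K1: "X / (2 * PA) \<le> real_of_int K" unfolding K_def by (rule le_of_int_ceiling)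
    have K2: "real_of_int K < X / (2 * PA) + 1" using ceiling_correct[of "X / (2 * PA)"] unfolding K_def by linarith
    have "real_of_int K > 0" using K1 q by linarith
    then have Kpos: "K \<ge> 1" by simp
    define Ns where "Ns = A(0 := A 0 * K)"
    have "(\<Prod>j<r. real_of_int (Ns j)) = real_of_int (Ns 0) * (\<Prod>j\<in>{..<r}-{0}. real_of_int (Ns j))"
      using r0 by (intro prod.remove) auto
    also have "(\<Prod>j\<in>{..<r}-{0}. real_of_int (Ns j)) = (\<Prod>j\<in>{..<r}-{0}. real_of_int (A j))"
      by (intro prod.cong) (auto simp: Ns_def)
    also have "real_of_int (Ns 0) * \<dots> = real_of_int K * (real_of_int (A 0) * (\<Prod>j\<in>{..<r}-{0}. real_of_int (A j)))"
      by (simp add: Ns_def mult_ac)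
    also have "real_of_int (A 0) * (\<Prod>j\<in>{..<r}-{0}. real_of_int (A j)) = PA"
      unfolding PA_def using r0 by (intro prod.remove[symmetric]) auto
    finally have pe: "(\<Prod>j<r. real_of_int (Ns j)) = real_of_int K * PA" .
    have "X/2 = X / (2 * PA) * PA" using PApos by simp
    also have "\<dots> \<le> real_of_int K * PA" using K1 PApos by (intro mult_right_mono) auto
    finally have lo: "X/2 \<le> real_of_int K * PA" .
    have "real_of_int K * PA \<le> (X / (2 * PA) + 1) * PA" using K2 PApos by (intro mult_right_mono) auto
    also have "\<dots> = X/2 + PA" using PApos by (simp add: field_simps)
    also have "\<dots> \<le> X" using False by simp
    also have "\<dots> \<le> 2^(d^2) * X" using X_pos by simp
    finally have hi: "real_of_int K * PA \<le> 2^(d^2) * X" .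
    have "\<forall>j<r. Ns j \<ge> A j"
    proof (intro allI impI)
      fix j assume "j < r"
      show "Ns j \<ge> A j"
      proof (cases "j = 0")
        case True
        have "A 0 * 1 \<le> A 0 * K" using Apos[OF r0] Kpos by (intro mult_left_mono) auto
        then show ?thesis using True by (simp add: Ns_def)
      qed (simp add: Ns_def)
    qed
    then show ?thesis using lo hi pe by (intro exI[of _ Ns]) auto
  qed
  then obtain Ns where Ns: "\<forall>j<r. Ns j \<ge> A j" "X/2 \<le> (\<Prod>j<r. real_of_int (Ns j))" "(\<Prod>j<r. real_of_int (Ns j)) \<le> 2^(d^2) * X"
    by blast
  have ker: "(\<forall>j<r. affine_map d B v x1 j = affine_map d B v x2 j) \<longleftrightarrow> (\<exists>k::int. \<forall>i<d. x1 i - x2 i = k * b i)" for x1 x2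
  proof -
    have e: "affine_map d B v x1 j = affine_map d B v x2 j \<longleftrightarrow> dotd (B j) (\<lambda>i. x1 i - x2 i) = 0" for j
      by (simp add: affine_map_def dotd_def right_diff_distrib sum_subtractf)
    show ?thesis
    proof
      assume "\<forall>j<r. affine_map d B v x1 j = affine_map d B v x2 j"
      then have "\<forall>j<r. dotd (B j) (\<lambda>i. x1 i - x2 i) = 0" using e by blast
      then show "\<exists>k::int. \<forall>i<d. x1 i - x2 i = k * b i" using B(1) unfolding Good_def by blast
    next
      assume "\<exists>k::int. \<forall>i<d. x1 i - x2 i = k * b i"
      then obtain k where k: "\<forall>i<d. x1 i - x2 i = k * b i" by blast
      have "dotd (B j) (\<lambda>i. x1 i - x2 i) = 0" if "j < r" for j
      proof -
        have "dotd (B j) (\<lambda>i. x1 i - x2 i) = k * dotd (B j) b"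
          unfolding dotd_def using k by (simp add: sum_distrib_left mult_ac)
        then show ?thesis using B(1) that unfolding Good_def by simp
      qed
      then show "\<forall>j<r. affine_map d B v x1 j = affine_map d B v x2 j" using e by blast
    qed
  qed
  have c1: "\<forall>x1 x2. (\<forall>j<r. affine_map d B v x1 j = affine_map d B v x2 j) \<longleftrightarrow> (\<exists>k::int. \<forall>i<d. x1 i - x2 i = k * b i)"
    using ker by blast
  have c2: "\<forall>j<r. Ns j > 0 \<and> Ns j \<ge> Min (N ` {..<d})"
  proof (intro allI impI)
    fix j assume j: "j < r"
    have "A j \<le> Ns j" "0 < A j" "Min (N ` {..<d}) \<le> A j" using Ns(1) Apos Amin j by auto
    then show "Ns j > 0 \<and> Ns j \<ge> Min (N ` {..<d})" by simp
  qed
  have c3: "1/2 * (\<Prod>i<d. real_of_int (N i)) * Tm \<le> (\<Prod>j<r. real_of_int (Ns j))" using Ns(2) by (simp add: X_def)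
  have c4: "(\<Prod>j<r. real_of_int (Ns j)) \<le> 2^(d^2) * (\<Prod>i<d. real_of_int (N i)) * Tm" using Ns(3) by (simp add: X_def mult_ac)
  have c5: "\<forall>x. (\<forall>i<d. x i \<in> {1..N i}) \<longrightarrow> (\<forall>j<r. affine_map d B v x j \<in> {1..Ns j})"
  proof (intro allI impI)
    fix x j assume "\<forall>i<d. x i \<in> {1..N i}" "j < r"
    then show "affine_map d B v x j \<in> {1..Ns j}" using cont[of j x] Ns(1) by fastforce
  qed
  show ?thesis unfolding rd Mx using c1 c2 c3 c4 c5 by blast
qed

end

theorem lemma4p5:
  fixes d :: nat and N :: "nat \<Rightarrow> int" and b :: "nat \<Rightarrow> int"
  assumes "d \<ge> 2"
    and "\<forall>i<d. N i > 0"
    and "\<exists>i<d. b i \<noteq> 0"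
    and "Gcd (b ` {..<d}) = 1"
    and "\<forall>i<d. \<bar>b i\<bar> \<le> N i"
  shows "\<exists>(M :: nat \<Rightarrow> nat \<Rightarrow> int) (v :: nat \<Rightarrow> int).
     (\<forall>x1 x2 :: nat \<Rightarrow> int.
        (\<forall>j<d-1. affine_map d M v x1 j = affine_map d M v x2 j)
        \<longleftrightarrow> (\<exists>k::int. \<forall>i<d. x1 i - x2 i = k * b i))
   \<and> (\<exists>Ns :: nat \<Rightarrow> int.
        (\<forall>j<d-1. Ns j > 0 \<and> Ns j \<ge> Min (N ` {..<d}))
      \<and> (1/2) * (\<Prod>i<d. real_of_int (N i)) * Max ((\<lambda>i. real_of_int \<bar>b i\<bar> / real_of_int (N i)) ` {..<d})
          \<le> (\<Prod>j<d-1. real_of_int (Ns j))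
      \<and> (\<Prod>j<d-1. real_of_int (Ns j))
          \<le> 2 ^ (d^2) * (\<Prod>i<d. real_of_int (N i)) * Max ((\<lambda>i. real_of_int \<bar>b i\<bar> / real_of_int (N i)) ` {..<d})
      \<and> (\<forall>x :: nat \<Rightarrow> int. (\<forall>i<d. x i \<in> {1..N i}) \<longrightarrow>
            (\<forall>j<d-1. affine_map d M v x j \<in> {1..Ns j})))"
  proof -
  have "conc d N b" using assms by (simp add: conc_def)
  from conc.main[OF this] show ?thesis .
qed

end
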